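(* Let $0\le M\le N$ be integers, let $y=(y_1,\dots,y_M)$ be a half-space configuration and $(w_1,\dots,w_N)\in\mathbb{C}^N$ (generic). Then, for the half-space ASEP with $\gamma=0$, \[\sum_{y'}\langle y|\mathscr{L}|y'\rangle\,\mathcal{F}_{y'}(w_1,\dots,w_N)=\left(-\alpha+\sum_{i=1}^N\frac{(1-q)^2w_i}{(1-w_i)(1-qw_i)}\right)\mathcal{F}_y(w_1,\dots,w_N),\] the sum running over all half-space configurations $y'$.
   Context: Half-space ASEP with parameters $q>0$, $q\ne1$, $\alpha\ge0$ and exit rate $\gamma=0$: state space the finite subsets of $\mathbb{N}=\{1,2,\dots\}$, a configuration $y=(y_1,\dots,y_M)$ with $y_1>\dots>y_M\ge1$. A particle at $x$ jumps to $x+1$ at rate $1$ and to $x-1$ (if $x\ge2$) at rate $q$, only onto empty sites; a particle enters at site $1$ at rate $\alpha$ when site $1$ is empty. The generator matrix $\langle y|\mathscr{L}|y'\rangle$ equals, for $y'\neq y$, the rate of the single transition from $y$ to $y'$ (zero if there is none), and $\langle y|\mathscr{L}|y\rangle=-\sum_{y'\ne y}\langle y|\mathscr{L}|y'\rangle$. $\mathcal{B}_N$ is the group of signed permutations of $\{1,\dots,N\}$ acting by $\sigma(f(w_1,\dots,w_N))=f(w_{\sigma(1)},\dots,w_{\sigma(N)})$ with $w_{-k}:=1/(qw_k)$. With $V_k=\frac{q^{\binom{k}{2}}(1-q)^k}{\prod_{i=1}^k(1-q^i)(1+q^{i-1})}$ and $\varphi_y(w)=\frac{1-q-\alpha+\alpha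 w}{1-qw^2}\frac{(1-q)w}{1-w}\left(\frac{1-qw}{1-w}\right)^{y-1}$, for a configuration $y$ with $M\le N$ parts \[\mathcal{F}_y(w_1,\dots,w_N)=V_{N-M}\alpha^{N-M}\sum_{\sigma\in\mathcal{B}_N}\sigma\!\left(\prod_{1\le i<j\le N}\left[\frac{w_i-qw_j}{w_i-w_j}\frac{1-w_iw_j}{1-qw_iw_j}\right]\prod_{i=1}^M\varphi_{y_i}(w_i)\right),\] and $\mathcal{F}_y:=0$ if $y$ has more than $N$ parts. *)

theory Defs
  imports Complex_Main
begin

definition is_config :: "nat set \<Rightarrow> bool" where
  "is_config y \<longleftrightarrow> finite y \<and> 0 \<notin> y"

text \<open>Ordered parts y_1 > y_2 > ... > y_M (list index i-1 holds y_i).\<close>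
definition parts :: "nat set \<Rightarrow> nat list" where
  "parts y = rev (sorted_list_of_set y)"

definition rate :: "real \<Rightarrow> real \<Rightarrow> nat set \<Rightarrow> nat set \<Rightarrow> real" where
  "rate q \<alpha> y y' =
     (if \<exists>x\<in>y. x + 1 \<notin> y \<and> y' = insert (x + 1) (y - {x}) then 1 else 0)
   + (if \<exists>x\<in>y. x \<ge> 2 \<and> x - 1 \<notin> y \<and> y' = insert (x - 1) (y - {x}) then q else 0)
   + (if 1 \<notin> y \<and> y' = insert 1 y then \<alpha> else 0)"

definition gen :: "real \<Rightarrow> real \<Rightarrow> nat set \<Rightarrow> nat set \<Rightarrow> real" where
  "gen q \<alpha> y y' =
     (if y' \<noteq> y then rate q \<alpha> y y'
      else - (\<Sum>z\<in>{z. is_config z \<and> z \<noteq> y \<and> rate q \<alpha> y z \<noteq> 0}. rate q \<alpha> y z))"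

definition signed_perms :: "nat \<Rightarrow> (nat \<Rightarrow> int) set" where
  "signed_perms N = {\<sigma>. (\<forall>k. k \<notin> {1..N} \<longrightarrow> \<sigma> k = 0) \<and> (\<forall>k\<in>{1..N}. \<sigma> k \<noteq> 0)
      \<and> bij_betw (\<lambda>k. nat \<bar>\<sigma> k\<bar>) {1..N} {1..N}}"

text \<open>w_{sigma(k)} with the convention w_{-k} = 1/(q w_k).\<close>
definition wsig :: "real \<Rightarrow> (nat \<Rightarrow> complex) \<Rightarrow> (nat \<Rightarrow> int) \<Rightarrow> nat \<Rightarrow> complex" where
  "wsig q w \<sigma> k = (if \<sigma> k > 0 then w (nat (\<sigma> k)) else 1 / (of_real q * w (nat (- \<sigma> k))))"

definition Vconst :: "real \<Rightarrow> nat \<Rightarrow> real" where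
  "Vconst q k = q ^ (k choose 2) * (1 - q) ^ k / (\<Prod>i=1..k. (1 - q ^ i) * (1 + q ^ (i - 1)))"

definition phi :: "real \<Rightarrow> real \<Rightarrow> nat \<Rightarrow> complex \<Rightarrow> complex" where
  "phi q \<alpha> x z = (1 - of_real q - of_real \<alpha> + of_real \<alpha> * z) / (1 - of_real q * z ^ 2)
      * ((1 - of_real q) * z / (1 - z)) * ((1 - of_real q * z) / (1 - z)) ^ (x - 1)"

definition Ffun :: "real \<Rightarrow> real \<Rightarrow> nat \<Rightarrow> nat set \<Rightarrow> (nat \<Rightarrow> complex) \<Rightarrow> complex" where
  "Ffun q \<alpha> N y w =
     (let M = card y; ys = parts y in
      if M > N then 0 else
      of_real (Vconst q (N - M) * \<alpha> ^ (N - M)) *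
      (\<Sum>\<sigma>\<in>signed_perms N. let u = wsig q w \<sigma> in
         (\<Prod>i\<in>{1..N}. \<Prod>j\<in>{i<..N}.
            (u i - of_real q * u j) / (u i - u j) * ((1 - u i * u j) / (1 - of_real q * u i * u j)))
         * (\<Prod>i\<in>{1..M}. phi q \<alpha> (ys ! (i - 1)) (u i))))"

text \<open>Genericity: every denominator occurring in F (for every signed permutation) and in the
  eigenvalue is nonzero.  Here a, b range over w_i, w_{-i} = 1/(q w_i).\<close>
definition generic :: "real \<Rightarrow> nat \<Rightarrow> (nat \<Rightarrow> complex) \<Rightarrow> bool" where
  "generic q N w \<longleftrightarrow>
     (\<forall>i\<in>{1..N}. w i \<noteq> 0) \<and>
     (\<forall>i\<in>{1..N}. \<forall>a\<in>{w i, 1 / (of_real q * w i)}.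
        a \<noteq> 1 \<and> of_real q * a \<noteq> 1 \<and> of_real q * a ^ 2 \<noteq> 1) \<and>
     (\<forall>i\<in>{1..N}. \<forall>j\<in>{1..N}. i \<noteq> j \<longrightarrow>
        (\<forall>a\<in>{w i, 1 / (of_real q * w i)}. \<forall>b\<in>{w j, 1 / (of_real q * w j)}.
           a \<noteq> b \<and> of_real q * a * b \<noteq> 1))"

end

theory Submission
  imports Defs
begin


definition Kp :: "complex set \<Rightarrow> complex \<Rightarrow> complex" where
  "Kp X x = (\<Prod>y\<in>X-{x}. (x + y) / (x - y))"

definition Lf :: "complex set \<Rightarrow> complex \<Rightarrow> complex" where
  "Lf X z = (\<Prod>y\<in>X. (z + y) / (z - y))"

lemma Kp_insert:
  assumes "finite X" "c \<notin> X" "x \<in> X"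
  shows "Kp (insert c X) x = (x + c) / (x - c) * Kp X x"
proof -
  have "insert c X - {x} = insert c (X - {x})" using assms by auto
  then show ?thesis unfolding Kp_def using assms by simp
qed

lemma Kp_insert_self:
  assumes "finite X" "c \<notin> X"
  shows "Kp (insert c X) c = Lf X c"
proof -
  have "insert c X - {c} = X" using assms by auto
  then show ?thesis unfolding Kp_def Lf_def by simp
qed

lemma PF:
  assumes "finite X" "z \<notin> X"
  shows "Lf X z = 1 + (\<Sum>x\<in>X. 2 * x * Kp X x / (z - x))"
  using assms
proof (induction X arbitrary: z rule: finite_induct)
  case empty
  then show ?case by (simp add: Lf_def)
next
  case (insert c X)
  have zc: "z \<noteq> c" and zX: "z \<notin> X" using insert by auto
  have IHz: "Lf X z = 1 + (\<Sum>x\<in>X. 2 * x * Kp X x / (z - x))" using insert zX by blast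
  have IHc: "Lf X c = 1 + (\<Sum>x\<in>X. 2 * x * Kp X x / (c - x))" using insert by blast
  have LI: "Lf (insert c X) z = (z + c) / (z - c) * Lf X z"
    unfolding Lf_def using insert by simp
  have "(\<Sum>x\<in>insert c X. 2 * x * Kp (insert c X) x / (z - x))
      = 2 * c * Lf X c / (z - c) + (\<Sum>x\<in>X. 2 * x * ((x + c) / (x - c) * Kp X x) / (z - x))"
    using insert by (simp add: Kp_insert Kp_insert_self)
  also have "(\<Sum>x\<in>X. 2 * x * ((x + c) / (x - c) * Kp X x) / (z - x))
      = (\<Sum>x\<in>X. (z + c) / (z - c) * (2 * x * Kp X x / (z - x)) - 2 * c / (z - c) * (2 * x * Kp X x / (c - x)))"
  proof (rule sum.cong[OF refl])
    fix x assume "x \<in> X"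
    then have "x \<noteq> c" "z \<noteq> x" using insert zX zc by auto
    then show "2 * x * ((x + c) / (x - c) * Kp X x) / (z - x)
      = (z + c) / (z - c) * (2 * x * Kp X x / (z - x)) - 2 * c / (z - c) * (2 * x * Kp X x / (c - x))"
      using zc by (simp add: divide_simps) (simp add: algebra_simps)
  qed
  also have "\<dots> = (z + c) / (z - c) * (Lf X z - 1) - 2 * c / (z - c) * (Lf X c - 1)"
    by (simp add: sum_subtractf sum_distrib_left IHz IHc)
  finally have "(\<Sum>x\<in>insert c X. 2 * x * Kp (insert c X) x / (z - x)) = 
     2 * c * Lf X c / (z - c) + ((z + c) / (z - c) * (Lf X z - 1) - 2 * c / (z - c) * (Lf X c - 1))" .
  then show ?case unfolding LI using zc by (simp add: divide_simps) (simp add: algebra_simps)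
qed

definition KS :: "complex set \<Rightarrow> (complex \<Rightarrow> complex) \<Rightarrow> complex" where
  "KS X f = (\<Sum>x\<in>X. f x * Kp X x)"

lemma KS_insert_aux:
  assumes "finite X" "c \<notin> X"
  shows "KS (insert c X) f = f c * Lf X c + (\<Sum>x\<in>X. f x * ((x + c) / (x - c)) * Kp X x)"
  using assms by (simp add: KS_def Kp_insert Kp_insert_self mult.assoc)

lemma PFc:
  assumes "finite X" "c \<notin> X"
  shows "(\<Sum>x\<in>X. 2 * x * Kp X x / (x - c)) = 1 - Lf X c"
proof -
  have "(\<Sum>x\<in>X. 2 * x * Kp X x / (x - c)) = (\<Sum>x\<in>X. - (2 * x * Kp X x / (c - x)))"
  proof (rule sum.cong[OF refl])
    fix x assume "x \<in> X" then have "x - c \<noteq> 0" "c - x \<noteq> 0" using assms by auto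
    then show "2 * x * Kp X x / (x - c) = - (2 * x * Kp X x / (c - x))" by (simp add: field_simps)
  qed
  also have "\<dots> = - (\<Sum>x\<in>X. 2 * x * Kp X x / (c - x))" by (simp add: sum_negf)
  finally have "(\<Sum>x\<in>X. 2 * x * Kp X x / (x - c)) = - (\<Sum>x\<in>X. 2 * x * Kp X x / (c - x))" .
  then show ?thesis using PF[OF assms] by simp
qed

lemma KS_one_insert:
  assumes "finite X" "c \<notin> X"
  shows "KS (insert c X) (\<lambda>_. 1) = 1 - KS X (\<lambda>_. 1)"
proof -
  have "(\<Sum>x\<in>X. 1 * ((x + c) / (x - c)) * Kp X x) = (\<Sum>x\<in>X. 2 * x * Kp X x / (x - c) - Kp X x)"
  proof (rule sum.cong[OF refl])
    fix x assume "x \<in> X" then have "x \<noteq> c" using assms by auto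
    then show "1 * ((x + c) / (x - c)) * Kp X x = 2 * x * Kp X x / (x - c) - Kp X x"
      by (simp add: field_simps)
  qed
  also have "\<dots> = 1 - Lf X c - KS X (\<lambda>_. 1)"
    using PFc[OF assms] by (simp add: sum_subtractf KS_def)
  finally show ?thesis using KS_insert_aux[OF assms, of "\<lambda>_. 1"] by simp
qed

lemma KS_one:
  assumes "finite X"
  shows "KS X (\<lambda>_. 1) = (if even (card X) then 0 else 1)"
  using assms
proof (induction X rule: finite_induct)
  case empty then show ?case by (simp add: KS_def)
next
  case (insert c X) then show ?case by (simp add: KS_one_insert)
qed

lemma KS_id_insert:
  assumes "finite X" "c \<notin> X"
  shows "KS (insert c X) (\<lambda>x. x) = KS X (\<lambda>x. x) + c"
proof -
  have "(\<Sum>x\<in>X. x * ((x + c) / (x - c)) * Kp X x)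
      = (\<Sum>x\<in>X. x * Kp X x + c * (2 * x * Kp X x / (x - c)))"
  proof (rule sum.cong[OF refl])
    fix x assume "x \<in> X" then have "x \<noteq> c" using assms by auto
    then show "x * ((x + c) / (x - c)) * Kp X x = x * Kp X x + c * (2 * x * Kp X x / (x - c))"
      by (simp add: field_simps)
  qed
  also have "\<dots> = KS X (\<lambda>x. x) + c * (\<Sum>x\<in>X. 2 * x * Kp X x / (x - c))"
    by (simp only: sum.distrib sum_distrib_left KS_def)
  also have "\<dots> = KS X (\<lambda>x. x) + c * (1 - Lf X c)"
    using PFc[OF assms] by simp
  finally show ?thesis using KS_insert_aux[OF assms, of "\<lambda>x. x"] by (simp add: algebra_simps)
qed

lemma KS_id:
  assumes "finite X"
  shows "KS X (\<lambda>x. x) = (\<Sum>x\<in>X. x)"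
  using assms
proof (induction X rule: finite_induct)
  case empty then show ?case by (simp add: KS_def)
next
  case (insert c X) then show ?case by (simp add: KS_id_insert)
qed

lemma KS_sq_insert:
  assumes "finite X" "c \<notin> X"
  shows "KS (insert c X) (\<lambda>x. x^2) = KS X (\<lambda>x. x^2) + 2 * c * KS X (\<lambda>x. x) + c^2"
proof -
  have "(\<Sum>x\<in>X. x^2 * ((x + c) / (x - c)) * Kp X x)
      = (\<Sum>x\<in>X. x^2 * Kp X x + 2 * c * (x * Kp X x) + c^2 * (2 * x * Kp X x / (x - c)))"
  proof (rule sum.cong[OF refl])
    fix x assume "x \<in> X" then have "x \<noteq> c" using assms by auto
    then show "x^2 * ((x + c) / (x - c)) * Kp X x = x^2 * Kp X x + 2 * c * (x * Kp X x) + c^2 * (2 * x * Kp X x / (x - c))"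
      by (simp add: field_simps power2_eq_square)
  qed
  also have "\<dots> = KS X (\<lambda>x. x^2) + 2 * c * KS X (\<lambda>x. x) + c^2 * (\<Sum>x\<in>X. 2 * x * Kp X x / (x - c))"
    by (simp only: sum.distrib sum_distrib_left KS_def)
  also have "\<dots> = KS X (\<lambda>x. x^2) + 2 * c * KS X (\<lambda>x. x) + c^2 * (1 - Lf X c)"
    using PFc[OF assms] by simp
  finally show ?thesis using KS_insert_aux[OF assms, of "\<lambda>x. x^2"] by (simp add: algebra_simps)
qed

lemma KS_sq:
  assumes "finite X"
  shows "KS X (\<lambda>x. x^2) = (\<Sum>x\<in>X. x)^2"
  using assms
proof (induction X rule: finite_induct)
  case empty then show ?case by (simp add: KS_def)
next
  case (insert c X)
  then have "KS (insert c X) (\<lambda>x. x^2) = (\<Sum>x\<in>X. x)^2 + 2 * c * (\<Sum>x\<in>X. x) + c^2"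
    by (simp add: KS_sq_insert KS_id)
  then show ?case using insert by (simp add: power2_eq_square algebra_simps)
qed

lemma KS_pole:
  assumes "finite X" "d \<notin> X" "d \<noteq> 0"
  shows "KS X (\<lambda>x. 1 / (x - d)) = (1 - Lf X d - 2 * KS X (\<lambda>_. 1)) / (2 * d)"
proof -
  have "(\<Sum>x\<in>X. 2 * x * Kp X x / (x - d)) = (\<Sum>x\<in>X. 2 * Kp X x + 2 * d * (1 / (x - d) * Kp X x))"
  proof (rule sum.cong[OF refl])
    fix x assume "x \<in> X" then have "x \<noteq> d" using assms by auto
    then show "2 * x * Kp X x / (x - d) = 2 * Kp X x + 2 * d * (1 / (x - d) * Kp X x)"
      by (simp add: field_simps)
  qed
  also have "\<dots> = 2 * KS X (\<lambda>_. 1) + 2 * d * KS X (\<lambda>x. 1 / (x - d))"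
    by (simp add: sum.distrib sum_distrib_left KS_def)
  finally show ?thesis using PFc[OF assms(1,2)] assms(3) by (simp add: field_simps)
qed



definition iota :: "complex \<Rightarrow> complex \<Rightarrow> complex" where "iota Q z = 1 / (Q * z)"
definition ax :: "complex \<Rightarrow> complex \<Rightarrow> complex" where "ax Q v = (1 - Q*v)/(1-v)"
definition xi :: "complex \<Rightarrow> complex \<Rightarrow> complex" where "xi Q v = ax Q v - (1 + Q) / 2"
definition Sm :: "complex \<Rightarrow> complex \<Rightarrow> complex \<Rightarrow> complex" where
  "Sm Q a b = (a - Q*b)/(a-b) * ((1 - a*b)/(1 - Q*a*b))"
definition Pp :: "complex \<Rightarrow> complex \<Rightarrow> complex set \<Rightarrow> complex" where
  "Pp Q v U = (\<Prod>u\<in>U. Sm Q v u)"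
definition tw :: "complex \<Rightarrow> (complex \<Rightarrow> complex) \<Rightarrow> complex \<Rightarrow> complex" where
  "tw Q f w = f w + f (iota Q w)"
definition Tsum :: "complex \<Rightarrow> (complex \<Rightarrow> complex) \<Rightarrow> complex set \<Rightarrow> complex" where
  "Tsum Q h W = (\<Sum>w\<in>W. tw Q (\<lambda>v. h v * Pp Q v (W - {w})) w)"
definition Vz :: "complex \<Rightarrow> complex set \<Rightarrow> complex set" where
  "Vz Q W = (\<Union>u\<in>W. {u, iota Q u})"
definition Xi :: "complex \<Rightarrow> complex set \<Rightarrow> complex set" where
  "Xi Q W = xi Q ` Vz Q W"
definition eps :: "complex \<Rightarrow> complex \<Rightarrow> complex" where
  "eps Q v = (1 - Q)^2 * v / ((1 - v) * (1 - Q * v))"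
definition gW :: "complex \<Rightarrow> complex set \<Rightarrow> bool" where
  "gW Q W \<longleftrightarrow> finite W \<and>
     (\<forall>u\<in>W. u \<noteq> 0 \<and> (\<forall>a\<in>{u, iota Q u}. a \<noteq> 1 \<and> Q*a \<noteq> 1 \<and> Q*a^2 \<noteq> 1)) \<and>
     (\<forall>u\<in>W. \<forall>u'\<in>W. u \<noteq> u' \<longrightarrow> (\<forall>a\<in>{u, iota Q u}. \<forall>b\<in>{u', iota Q u'}. a \<noteq> b \<and> Q*a*b \<noteq> 1))"
definition Rf :: "complex \<Rightarrow> complex \<Rightarrow> complex" where
  "Rf Q v = (xi Q v + xi Q (iota Q v)) / (xi Q v - xi Q (iota Q v))"

lemma gW_subset: "gW Q W \<Longrightarrow> U \<subseteq> W \<Longrightarrow> gW Q U"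
  unfolding gW_def by (meson finite_subset subsetD)

lemma gW_finite: "gW Q W \<Longrightarrow> finite W" unfolding gW_def by simp

lemma iota_ne0: "Q \<noteq> 0 \<Longrightarrow> u \<noteq> 0 \<Longrightarrow> iota Q u \<noteq> 0" unfolding iota_def by simp

lemma iota_iota: "Q \<noteq> 0 \<Longrightarrow> u \<noteq> 0 \<Longrightarrow> iota Q (iota Q u) = u" unfolding iota_def by simp

lemma node_ok:
  assumes "gW Q W" "Q \<noteq> 0" "u \<in> W" "a \<in> {u, iota Q u}"
  shows "a \<noteq> 0" "a \<noteq> 1" "Q*a \<noteq> 1" "Q*a^2 \<noteq> 1"
  using assms iota_ne0[of Q u] unfolding gW_def by auto

lemma node_ok2:
  assumes "gW Q W" "u \<in> W" "u' \<in> W" "u \<noteq> u'" "a \<in> {u, iota Q u}" "b \<in> {u', iota Q u'}"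
  shows "a \<noteq> b" "Q*a*b \<noteq> 1"
  using assms unfolding gW_def by blast+

lemma u_ne_iota: "gW Q W \<Longrightarrow> Q \<noteq> 0 \<Longrightarrow> u \<in> W \<Longrightarrow> u \<noteq> iota Q u"
proof
  assume a: "gW Q W" "Q \<noteq> 0" "u \<in> W" "u = iota Q u"
  then have "u \<noteq> 0" "Q * u^2 \<noteq> 1" using node_ok[of Q W u u] by auto
  moreover have "u * (Q * u) = 1" using a(4) a(2) \<open>u \<noteq> 0\<close> unfolding iota_def
    by (metis divide_self_if mult_eq_0_iff nonzero_eq_divide_eq)
  ultimately show False by (simp add: power2_eq_square algebra_simps)
qed

lemma ax_diff: "v \<noteq> 1 \<Longrightarrow> u \<noteq> 1 \<Longrightarrow> ax Q v - ax Q u = (1-Q)*(v-u)/((1-v)*(1-u))"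
  unfolding ax_def by (simp add: divide_simps) (simp add: algebra_simps)

lemma ax_sum: "v \<noteq> 1 \<Longrightarrow> u \<noteq> 1 \<Longrightarrow> ax Q v + ax Q u - (1+Q) = (1-Q)*(1-u*v)/((1-v)*(1-u))"
  unfolding ax_def by (simp add: divide_simps) (simp add: algebra_simps)

lemma xi_ratio: "Q \<noteq> 1 \<Longrightarrow> v \<noteq> 1 \<Longrightarrow> u \<noteq> 1 \<Longrightarrow> v \<noteq> u \<Longrightarrow>
   (xi Q v + xi Q u) / (xi Q v - xi Q u) = (1 - u*v)/(v-u)"
proof -
  assume a: "Q \<noteq> 1" "v \<noteq> 1" "u \<noteq> 1" "v \<noteq> u"
  have "xi Q v + xi Q u = ax Q v + ax Q u - (1+Q)" "xi Q v - xi Q u = ax Q v - ax Q u"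
    unfolding xi_def by (simp_all add: field_simps)
  then show ?thesis using a by (simp add: ax_diff ax_sum)
qed

lemma xi_inj: "Q \<noteq> 1 \<Longrightarrow> v \<noteq> 1 \<Longrightarrow> u \<noteq> 1 \<Longrightarrow> xi Q v = xi Q u \<Longrightarrow> v = u"
proof -
  assume a: "Q \<noteq> 1" "v \<noteq> 1" "u \<noteq> 1" "xi Q v = xi Q u"
  then have "ax Q v - ax Q u = 0" unfolding xi_def by simp
  then show "v = u" using a by (simp add: ax_diff)
qed

lemma S_ratio: "Q \<noteq> 0 \<Longrightarrow> v \<noteq> u \<Longrightarrow> u \<noteq> 0 \<Longrightarrow> Q*v*u \<noteq> 1 \<Longrightarrow>
   Sm Q v u = (1 - u*v)/(v-u) * ((1 - (iota Q u)*v)/(v-(iota Q u)))"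
  unfolding Sm_def iota_def by (simp add: divide_simps) (simp add: algebra_simps)

lemma S_xi:
  assumes "Q \<noteq> 0" "Q \<noteq> 1" "v \<noteq> u" "v \<noteq> iota Q u" "u \<noteq> 0" "Q*v*u \<noteq> 1" "v \<noteq> 1" "u \<noteq> 1" "iota Q u \<noteq> 1"
  shows "Sm Q v u = (xi Q v + xi Q u) / (xi Q v - xi Q u) * ((xi Q v + xi Q (iota Q u)) / (xi Q v - xi Q (iota Q u)))"
  using assms by (simp add: S_ratio xi_ratio)

lemma S_iota2:
  assumes "Q \<noteq> 0" "u \<noteq> 0"
  shows "Sm Q v (iota Q u) = Sm Q v u"
  using assms unfolding Sm_def iota_def by (simp add: divide_simps) (simp add: algebra_simps)


lemma Vz_disj:
  assumes "gW Q W"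
  shows "\<forall>i\<in>W. \<forall>j\<in>W. i \<noteq> j \<longrightarrow> {i, iota Q i} \<inter> {j, iota Q j} = {}"
  using node_ok2[OF assms] by blast

lemma sum_Vz:
  assumes "gW Q W" "Q \<noteq> 0"
  shows "(\<Sum>v\<in>Vz Q W. g v) = (\<Sum>u\<in>W. tw Q g u)"
proof -
  have "(\<Sum>v\<in>Vz Q W. g v) = (\<Sum>u\<in>W. sum g {u, iota Q u})"
    unfolding Vz_def by (rule sum.UNION_disjoint) (use assms gW_finite Vz_disj in auto)
  also have "\<dots> = (\<Sum>u\<in>W. tw Q g u)"
    by (rule sum.cong[OF refl]) (use u_ne_iota[OF assms] in \<open>simp add: tw_def\<close>)
  finally show ?thesis .
qed

lemma prod_Vz:
  assumes "gW Q W" "Q \<noteq> 0"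
  shows "(\<Prod>v\<in>Vz Q W. g v) = (\<Prod>u\<in>W. g u * g (iota Q u))"
proof -
  have "(\<Prod>v\<in>Vz Q W. g v) = (\<Prod>u\<in>W. prod g {u, iota Q u})"
    unfolding Vz_def by (rule prod.UNION_disjoint) (use assms gW_finite Vz_disj in auto)
  also have "\<dots> = (\<Prod>u\<in>W. g u * g (iota Q u))"
    by (rule prod.cong[OF refl]) (use u_ne_iota[OF assms] in simp)
  finally show ?thesis .
qed

lemma Vz_ne1: "gW Q W \<Longrightarrow> Q \<noteq> 0 \<Longrightarrow> v \<in> Vz Q W \<Longrightarrow> v \<noteq> 1"
  unfolding Vz_def using node_ok by blast

lemma xi_inj_Vz: "gW Q W \<Longrightarrow> Q \<noteq> 0 \<Longrightarrow> Q \<noteq> 1 \<Longrightarrow> inj_on (xi Q) (Vz Q W)"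
proof (rule inj_onI)
  fix x y assume "gW Q W" "Q \<noteq> 0" "Q \<noteq> 1" "x \<in> Vz Q W" "y \<in> Vz Q W" "xi Q x = xi Q y"
  then show "x = y" using Vz_ne1[of Q W x] Vz_ne1[of Q W y] xi_inj[of Q x y] by blast
qed

lemma finite_Vz: "gW Q W \<Longrightarrow> finite (Vz Q W)"
  unfolding Vz_def using gW_finite by auto

lemma card_Vz: assumes "gW Q W" "Q \<noteq> 0" shows "card (Vz Q W) = 2 * card W"
proof -
  have "card (Vz Q W) = (\<Sum>u\<in>W. card {u, iota Q u})"
    unfolding Vz_def by (rule card_UN_disjoint) (use assms gW_finite Vz_disj in auto)
  also have "\<dots> = (\<Sum>u\<in>W. 2)" 
    by (rule sum.cong[OF refl]) (use u_ne_iota[OF assms] in simp)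
  finally show ?thesis by simp
qed

lemma card_Xi: assumes "gW Q W" "Q \<noteq> 0" "Q \<noteq> 1" shows "card (Xi Q W) = 2 * card W"
  unfolding Xi_def using card_image[OF xi_inj_Vz[OF assms(1,2,3)]] card_Vz[OF assms(1,2)] by simp

lemma finite_Xi: "gW Q W \<Longrightarrow> finite (Xi Q W)"
  unfolding Xi_def using finite_Vz by blast

lemma sum_Xi:
  assumes "gW Q W" "Q \<noteq> 0" "Q \<noteq> 1"
  shows "(\<Sum>x\<in>Xi Q W. g x) = (\<Sum>u\<in>W. tw Q (\<lambda>v. g (xi Q v)) u)"
  unfolding Xi_def using sum.reindex[OF xi_inj_Vz[OF assms], of g] sum_Vz[OF assms(1,2)] by simp

lemma prod_Xi:
  assumes "gW Q W" "Q \<noteq> 0" "Q \<noteq> 1"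
  shows "(\<Prod>x\<in>Xi Q W. g x) = (\<Prod>u\<in>W. g (xi Q u) * g (xi Q (iota Q u)))"
  unfolding Xi_def using prod.reindex[OF xi_inj_Vz[OF assms], of g] prod_Vz[OF assms(1,2)] by simp

lemma Vz_insert: "Vz Q (insert w W) = {w, iota Q w} \<union> Vz Q W"
  unfolding Vz_def by auto

lemma Xi_remove:
  assumes "gW Q W" "Q \<noteq> 0" "Q \<noteq> 1" "w \<in> W" "v \<in> {w, iota Q w}"
  shows "Xi Q W - {xi Q v} = insert (xi Q (iota Q v)) (Xi Q (W - {w}))"
    and "xi Q (iota Q v) \<notin> Xi Q (W - {w})"
    and "xi Q v \<notin> Xi Q (W - {w})"
proof -
  have W: "W = insert w (W - {w})" using assms by auto
  have vz: "Vz Q W = {w, iota Q w} \<union> Vz Q (W - {w})" using Vz_insert[of Q w "W - {w}"] W by simp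
  have disj: "{w, iota Q w} \<inter> Vz Q (W - {w}) = {}"
    unfolding Vz_def using node_ok2[OF assms(1)] assms(4) by blast
  have inj: "inj_on (xi Q) (Vz Q W)" by (rule xi_inj_Vz[OF assms(1,2,3)])
  have ii: "iota Q (iota Q w) = w" using iota_iota[of Q w] node_ok(1)[OF assms(1,2,4), of w] assms(2) by simp
  have vv: "{w, iota Q w} = {v, iota Q v}" using assms(5) ii by auto
  have vne: "v \<noteq> iota Q v" using assms(5) u_ne_iota[OF assms(1,2,4)] ii by auto
  have sub: "{v, iota Q v} \<subseteq> Vz Q W" "Vz Q (W - {w}) \<subseteq> Vz Q W" using vz vv by auto
  show "xi Q (iota Q v) \<notin> Xi Q (W - {w})" "xi Q v \<notin> Xi Q (W - {w})"
    unfolding Xi_def using inj_on_image_mem_iff[OF inj] sub disj vv by auto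
  have "Xi Q W = xi Q ` {v, iota Q v} \<union> Xi Q (W - {w})" unfolding Xi_def using vz vv by auto
  moreover have "xi Q v \<noteq> xi Q (iota Q v)" using inj sub vne by (meson inj_on_contraD insert_subset)
  ultimately show "Xi Q W - {xi Q v} = insert (xi Q (iota Q v)) (Xi Q (W - {w}))"
    using \<open>xi Q v \<notin> Xi Q (W - {w})\<close> by auto
qed


lemma Kp_node:
  assumes "gW Q W" "Q \<noteq> 0" "Q \<noteq> 1" "w \<in> W" "v \<in> {w, iota Q w}"
  shows "Kp (Xi Q W) (xi Q v) = Rf Q v * Pp Q v (W - {w})"
proof -
  have g': "gW Q (W - {w})" using gW_subset[OF assms(1)] by blast
  have fin: "finite (Xi Q (W - {w}))" using finite_Xi[OF g'] .
  have "Kp (Xi Q W) (xi Q v) = (xi Q v + xi Q (iota Q v)) / (xi Q v - xi Q (iota Q v)) *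
          (\<Prod>y\<in>Xi Q (W - {w}). (xi Q v + y) / (xi Q v - y))"
    unfolding Kp_def Xi_remove(1)[OF assms] using fin Xi_remove(2)[OF assms] by simp
  also have "(\<Prod>y\<in>Xi Q (W - {w}). (xi Q v + y) / (xi Q v - y))
     = (\<Prod>u\<in>W - {w}. (xi Q v + xi Q u) / (xi Q v - xi Q u) * ((xi Q v + xi Q (iota Q u)) / (xi Q v - xi Q (iota Q u))))"
    using prod_Xi[OF g' assms(2,3)] .
  also have "\<dots> = Pp Q v (W - {w})"
    unfolding Pp_def
  proof (rule prod.cong[OF refl], rule S_xi[symmetric])
    fix u assume u: "u \<in> W - {w}"
    then have uW: "u \<in> W" "u \<noteq> w" by auto
    show "Q \<noteq> 0" "Q \<noteq> 1" using assms by auto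
    show "v \<noteq> u" "v \<noteq> iota Q u" "Q * v * u \<noteq> 1"
      using node_ok2[OF assms(1) assms(4) uW(1) uW(2)[symmetric] assms(5)] by auto
    show "u \<noteq> 0" "u \<noteq> 1" "iota Q u \<noteq> 1" using node_ok[OF assms(1,2) uW(1)] by auto
    show "v \<noteq> 1" using node_ok[OF assms(1,2,4,5)] by auto
  qed
  finally show ?thesis unfolding Rf_def .
qed

lemma Tsum_KS:
  assumes "gW Q W" "Q \<noteq> 0" "Q \<noteq> 1" "\<And>v. v \<in> Vz Q W \<Longrightarrow> h v = f (xi Q v) * Rf Q v"
  shows "Tsum Q h W = KS (Xi Q W) f"
proof -
  have "Tsum Q h W = (\<Sum>w\<in>W. tw Q (\<lambda>v. f (xi Q v) * Kp (Xi Q W) (xi Q v)) w)"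
    unfolding Tsum_def
  proof (rule sum.cong[OF refl])
    fix w assume w: "w \<in> W"
    have vz: "w \<in> Vz Q W" "iota Q w \<in> Vz Q W" using w unfolding Vz_def by auto
    show "tw Q (\<lambda>v. h v * Pp Q v (W - {w})) w = tw Q (\<lambda>v. f (xi Q v) * Kp (Xi Q W) (xi Q v)) w"
      unfolding tw_def using Kp_node[OF assms(1,2,3) w, of w] Kp_node[OF assms(1,2,3) w, of "iota Q w"]
        assms(4)[OF vz(1)] assms(4)[OF vz(2)] by simp
  qed
  also have "\<dots> = KS (Xi Q W) f"
    unfolding KS_def using sum_Xi[OF assms(1,2,3), of "\<lambda>x. f x * Kp (Xi Q W) x"] by simp
  finally show ?thesis .
qed

lemma KS_add: "KS X (\<lambda>x. f x + g x) = KS X f + KS X g"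
  unfolding KS_def by (simp add: algebra_simps sum.distrib)

lemma KS_cmult: "KS X (\<lambda>x. c * f x) = c * KS X f"
  unfolding KS_def by (simp add: algebra_simps sum_distrib_left)

lemma KS_const: "KS X (\<lambda>x. c) = c * KS X (\<lambda>_. 1)"
  using KS_cmult[of X c "\<lambda>_. 1"] by simp


lemma Rf_eq:
  assumes "Q \<noteq> 0" "Q \<noteq> 1" "v \<noteq> 0" "v \<noteq> 1" "Q*v \<noteq> 1" "Q*v^2 \<noteq> 1"
  shows "Rf Q v = (1 - Q) * v / (1 - Q * v^2)"
proof -
  have ne: "v \<noteq> iota Q v" using assms unfolding iota_def
    by (auto simp: divide_simps power2_eq_square algebra_simps)
  have ne1: "iota Q v \<noteq> 1" using assms unfolding iota_def by (auto simp: divide_simps)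
  have "Rf Q v = (1 - iota Q v * v) / (v - iota Q v)"
    unfolding Rf_def using xi_ratio[OF assms(2) assms(4) ne1 ne] .
  also have "\<dots> = (1 - Q) * v / (1 - Q * v^2)"
    using assms unfolding iota_def by (simp add: divide_simps power2_eq_square) (simp add: algebra_simps)
  finally show ?thesis .
qed

lemma phi_R:
  assumes "q \<noteq> 0" "q \<noteq> 1" "v \<noteq> 0" "v \<noteq> 1" "of_real q*v \<noteq> 1" "of_real q*v^2 \<noteq> 1"
  shows "phi q \<alpha> k v = (xi (of_real q) v + (1 + of_real q)/2 - of_real q - of_real \<alpha>) * (xi (of_real q) v + (1 + of_real q)/2)^(k-1) * Rf (of_real q) v"
proof -
  have Q: "(of_real q :: complex) \<noteq> 0" "(of_real q :: complex) \<noteq> 1" using assms by auto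
  have e1: "xi (of_real q) v + (1 + of_real q)/2 = ax (of_real q) v" unfolding xi_def by simp
  have e2: "phi q \<alpha> k v = (1 - of_real q - of_real \<alpha> + of_real \<alpha> * v) / (1 - of_real q * v^2)
      * ((1 - of_real q) * v / (1 - v)) * (ax (of_real q) v)^(k-1)"
    unfolding phi_def ax_def by simp
  have e3: "(1 - of_real q - of_real \<alpha> + of_real \<alpha> * v) / (1 - of_real q * v^2) * ((1 - of_real q) * v / (1 - v))
      = (ax (of_real q) v - of_real q - of_real \<alpha>) * Rf (of_real q) v"
    unfolding Rf_eq[OF Q assms(3-6)] ax_def using assms
    by (simp add: divide_simps) (simp add: algebra_simps)
  show ?thesis unfolding e2 e1 e3 by (simp only: mult_ac)
qed

lemma one_R:
  assumes "Q \<noteq> 0" "Q \<noteq> 1" "v \<noteq> 0" "v \<noteq> 1" "Q*v \<noteq> 1" "Q*v^2 \<noteq> 1"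
  shows "1 = (1 + 1 / (xi Q v - (1 - Q)/2) + Q / (xi Q v - - ((1 - Q)/2))) * Rf Q v"
proof -
  have a: "xi Q v - (1 - Q)/2 = ax Q v - 1" "xi Q v - - ((1 - Q)/2) = ax Q v - Q"
    unfolding xi_def by (simp_all add: field_simps)
  have b: "ax Q v - 1 = (1 - Q) * v / (1 - v)" "ax Q v - Q = (1 - Q) / (1 - v)"
    using assms unfolding ax_def by (simp_all add: divide_simps) (simp_all add: algebra_simps)
  show ?thesis unfolding Rf_eq[OF assms] a b using assms
    by (simp add: divide_simps power2_eq_square) (simp add: algebra_simps)
qed

lemma xi_iota: "Q \<noteq> 0 \<Longrightarrow> v \<noteq> 0 \<Longrightarrow> Q*v \<noteq> 1 \<Longrightarrow> v \<noteq> 1 \<Longrightarrow> xi Q (iota Q v) = Q / ax Q v - (1+Q)/2"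
  unfolding xi_def ax_def iota_def by (simp add: divide_simps) (simp add: algebra_simps)

lemma eps_xi:
  assumes "Q \<noteq> 0" "v \<noteq> 0" "v \<noteq> 1" "Q*v \<noteq> 1"
  shows "eps Q v = xi Q v + xi Q (iota Q v)"
  unfolding xi_iota[OF assms(1,2,4,3)] unfolding xi_def eps_def ax_def using assms
  by (simp add: divide_simps power2_eq_square) (simp add: algebra_simps)

lemma Lf_fac1:
  assumes "Q \<noteq> 0" "Q \<noteq> 1" "a \<noteq> 0" "a \<noteq> 1"
  shows "((1 - Q)/2 + xi Q a) / ((1 - Q)/2 - xi Q a) = - 1 / a"
  unfolding xi_def ax_def using assms by (simp add: divide_simps) (simp add: algebra_simps)

lemma Lf_fac2:
  assumes "Q \<noteq> 0" "Q \<noteq> 1" "a \<noteq> 0" "a \<noteq> 1"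
  shows "(- ((1 - Q)/2) + xi Q a) / (- ((1 - Q)/2) - xi Q a) = - a"
  unfolding xi_def ax_def using assms by (simp add: divide_simps) (simp add: algebra_simps)



definition EW :: "complex \<Rightarrow> complex set \<Rightarrow> complex" where
  "EW Q W = (\<Sum>u\<in>W. eps Q u)"

context
  fixes Q :: complex and W :: "complex set"
  assumes Q0: "Q \<noteq> 0" and Q1: "Q \<noteq> 1" and gw: "gW Q W"
begin

lemma Vz_node: "v \<in> Vz Q W \<Longrightarrow> v \<noteq> 0 \<and> v \<noteq> 1 \<and> Q*v \<noteq> 1 \<and> Q*v^2 \<noteq> 1"
proof -
  assume "v \<in> Vz Q W"
  then obtain u where u: "u \<in> W" "v \<in> {u, iota Q u}" unfolding Vz_def by blast
  show ?thesis using node_ok[OF gw Q0 u] by simp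
qed

lemma sum_Xi_id: "(\<Sum>x\<in>Xi Q W. x) = EW Q W"
  unfolding sum_Xi[OF gw Q0 Q1] EW_def tw_def
proof (rule sum.cong[OF refl])
  fix u assume "u \<in> W"
  then show "xi Q u + xi Q (iota Q u) = eps Q u" using eps_xi[OF Q0] node_ok[OF gw Q0, of u u] by auto
qed

lemma KS1_Xi: "KS (Xi Q W) (\<lambda>_. 1) = 0"
  using KS_one[OF finite_Xi[OF gw]] card_Xi[OF gw Q0 Q1] by simp

lemma d1_notin: "(1 - Q)/2 \<notin> Xi Q W"
proof
  assume "(1 - Q)/2 \<in> Xi Q W"
  then obtain v where v: "v \<in> Vz Q W" "xi Q v = (1 - Q)/2" unfolding Xi_def by auto
  then have "v \<noteq> 0" "v \<noteq> 1" using Vz_node by auto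
  moreover have "ax Q v = 1" using v(2) unfolding xi_def by (simp add: field_simps)
  ultimately show False using Q1 unfolding ax_def by (simp add: divide_simps; (simp add: algebra_simps)?)
qed

lemma md1_notin: "- ((1 - Q)/2) \<notin> Xi Q W"
proof
  assume "- ((1 - Q)/2) \<in> Xi Q W"
  then obtain v where v: "v \<in> Vz Q W" "xi Q v = - ((1 - Q)/2)" unfolding Xi_def by auto
  then have "v \<noteq> 0" "v \<noteq> 1" using Vz_node by auto
  moreover have "ax Q v = Q" using v(2) unfolding xi_def by (simp add: field_simps)
  ultimately show False using Q1 unfolding ax_def by (simp add: divide_simps; (simp add: algebra_simps)?)
qed

lemma Lf_d1: "Lf (Xi Q W) ((1 - Q)/2) = Q ^ card W"
proof -
  have "Lf (Xi Q W) ((1 - Q)/2) = (\<Prod>u\<in>W. (- 1 / u) * (- 1 / iota Q u))"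
    unfolding Lf_def prod_Xi[OF gw Q0 Q1]
  proof (rule prod.cong[OF refl])
    fix u assume u: "u \<in> W"
    have a: "u \<noteq> 0" "u \<noteq> 1" "iota Q u \<noteq> 0" "iota Q u \<noteq> 1" using node_ok[OF gw Q0 u] by auto
    show "((1 - Q) / 2 + xi Q u) / ((1 - Q) / 2 - xi Q u) *
         (((1 - Q) / 2 + xi Q (iota Q u)) / ((1 - Q) / 2 - xi Q (iota Q u))) =
         - 1 / u * (- 1 / iota Q u)"
      using Lf_fac1[OF Q0 Q1 a(1,2)] Lf_fac1[OF Q0 Q1 a(3,4)] by simp
  qed
  also have "\<dots> = (\<Prod>u\<in>W. Q)"
    by (rule prod.cong[OF refl]) (use node_ok[OF gw Q0] Q0 in \<open>auto simp: iota_def\<close>)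
  finally show ?thesis by simp
qed

lemma Lf_md1: "Lf (Xi Q W) (- ((1 - Q)/2)) = (1/Q) ^ card W"
proof -
  have "Lf (Xi Q W) (- ((1 - Q)/2)) = (\<Prod>u\<in>W. (- u) * (- iota Q u))"
    unfolding Lf_def prod_Xi[OF gw Q0 Q1]
  proof (rule prod.cong[OF refl])
    fix u assume u: "u \<in> W"
    have a: "u \<noteq> 0" "u \<noteq> 1" "iota Q u \<noteq> 0" "iota Q u \<noteq> 1" using node_ok[OF gw Q0 u] by auto
    show "(- ((1 - Q) / 2) + xi Q u) / (- ((1 - Q) / 2) - xi Q u) *
         ((- ((1 - Q) / 2) + xi Q (iota Q u)) / (- ((1 - Q) / 2) - xi Q (iota Q u))) =
         (- u) * (- iota Q u)"
      using Lf_fac2[OF Q0 Q1 a(1,2)] Lf_fac2[OF Q0 Q1 a(3,4)] by simp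
  qed
  also have "\<dots> = (\<Prod>u\<in>W. 1/Q)"
    by (rule prod.cong[OF refl]) (use node_ok[OF gw Q0] Q0 in \<open>auto simp: iota_def\<close>)
  finally show ?thesis by simp
qed

lemma I0: "Tsum Q (\<lambda>_. 1) W = (1 - Q ^ card W) / (1 - Q) + Q * (1 - (1/Q) ^ card W) / (Q - 1)"
proof -
  define d where "d = (1 - Q)/2"
  have d0: "d \<noteq> 0" "- d \<noteq> 0" using Q1 unfolding d_def by auto
  have "Tsum Q (\<lambda>_. 1) W = KS (Xi Q W) (\<lambda>x. 1 + 1 / (x - d) + Q / (x - - d))"
  proof (rule Tsum_KS[OF gw Q0 Q1])
    fix v assume "v \<in> Vz Q W"
    then have "v \<noteq> 0 \<and> v \<noteq> 1 \<and> Q*v \<noteq> 1 \<and> Q*v^2 \<noteq> 1" by (rule Vz_node)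
    then show "1 = (1 + 1 / (xi Q v - d) + Q / (xi Q v - - d)) * Rf Q v"
      unfolding d_def using one_R[OF Q0 Q1] by blast
  qed
  also have "\<dots> = KS (Xi Q W) (\<lambda>_. 1) + KS (Xi Q W) (\<lambda>x. 1 / (x - d)) + Q * KS (Xi Q W) (\<lambda>x. 1 / (x - - d))"
    using KS_add[of "Xi Q W" "\<lambda>x. 1 + 1 / (x - d)" "\<lambda>x. Q / (x - - d)"]
      KS_add[of "Xi Q W" "\<lambda>_. 1" "\<lambda>x. 1 / (x - d)"] KS_cmult[of "Xi Q W" Q "\<lambda>x. 1 / (x - - d)"]
    by simp
  also have "\<dots> = (1 - Q ^ card W) / (2 * d) + Q * ((1 - (1/Q) ^ card W) / (2 * - d))"
    using KS_pole[OF finite_Xi[OF gw] d1_notin[folded d_def] d0(1)]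
      KS_pole[OF finite_Xi[OF gw] md1_notin[folded d_def] d0(2)]
      Lf_d1[folded d_def] Lf_md1[folded d_def] KS1_Xi by simp
  finally have "Tsum Q (\<lambda>_. 1) W = (1 - Q ^ card W) / (2 * d) + Q * ((1 - (1/Q) ^ card W) / (2 * - d))" .
  moreover have "2 * d = 1 - Q" "2 * - d = - (1 - Q)" unfolding d_def by (simp_all add: field_simps)
  ultimately show ?thesis by simp
qed

end

lemma Tsum_phi:
  fixes q \<alpha> :: real
  assumes q0: "q \<noteq> 0" and q1: "q \<noteq> 1" and gw: "gW (of_real q) W"
  shows "Tsum (of_real q) (phi q \<alpha> k) W = KS (Xi (of_real q) W)
    (\<lambda>x. (x + (1 + of_real q)/2 - of_real q - of_real \<alpha>) * (x + (1 + of_real q)/2)^(k-1))"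
proof -
  have Q: "(of_real q :: complex) \<noteq> 0" "(of_real q :: complex) \<noteq> 1" using q0 q1 by auto
  show ?thesis
  proof (rule Tsum_KS[OF gw Q])
    fix v assume "v \<in> Vz (of_real q) W"
    then have "v \<noteq> 0 \<and> v \<noteq> 1 \<and> of_real q*v \<noteq> 1 \<and> of_real q*v^2 \<noteq> 1" by (rule Vz_node[OF Q gw])
    then show "phi q \<alpha> k v = (xi (of_real q) v + (1 + of_real q)/2 - of_real q - of_real \<alpha>) * (xi (of_real q) v + (1 + of_real q)/2)^(k-1) * Rf (of_real q) v"
      using phi_R[OF q0 q1] by blast
  qed
qed

lemma I1:
  fixes q \<alpha> :: real
  assumes q0: "q \<noteq> 0" and q1: "q \<noteq> 1" and gw: "gW (of_real q) W"
  shows "Tsum (of_real q) (phi q \<alpha> 1) W = EW (of_real q) W"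
proof -
  have Q: "(of_real q :: complex) \<noteq> 0" "(of_real q :: complex) \<noteq> 1" using q0 q1 by auto
  define c :: complex where "c = (1 + of_real q)/2 - of_real q - of_real \<alpha>"
  have e: "(\<lambda>x. (x + (1 + of_real q)/2 - of_real q - of_real \<alpha>) * (x + (1 + of_real q)/2)^(1-1)) = (\<lambda>x. x + c * 1)"
    by (rule ext) (simp add: c_def)
  show ?thesis unfolding Tsum_phi[OF q0 q1 gw] e KS_add KS_cmult KS1_Xi[OF Q gw]
    using KS_id[OF finite_Xi[OF gw]] sum_Xi_id[OF Q gw] by simp
qed

lemma I2:
  fixes q \<alpha> :: real
  assumes q0: "q \<noteq> 0" and q1: "q \<noteq> 1" and gw: "gW (of_real q) W"
  shows "Tsum (of_real q) (phi q \<alpha> 2) W = (EW (of_real q) W)^2 + (1 - of_real \<alpha>) * EW (of_real q) W"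
proof -
  have Q: "(of_real q :: complex) \<noteq> 0" "(of_real q :: complex) \<noteq> 1" using q0 q1 by auto
  define c :: complex where "c = (1 + of_real q)/2"
  have e: "(\<lambda>x. (x + (1 + of_real q)/2 - of_real q - of_real \<alpha>) * (x + (1 + of_real q)/2)^(2-1))
      = (\<lambda>x. x^2 + ((1 - of_real \<alpha>) * x + (c * (c - of_real q - of_real \<alpha>)) * 1))"
    by (rule ext) (simp add: c_def field_simps power2_eq_square)
  show ?thesis unfolding Tsum_phi[OF q0 q1 gw] e KS_add KS_cmult KS1_Xi[OF Q gw]
    using KS_id[OF finite_Xi[OF gw]] sum_Xi_id[OF Q gw] KS_sq[OF finite_Xi[OF gw]] by simp
qed



lemma collision_local:
  assumes "a \<noteq> b" "a \<noteq> 1" "b \<noteq> 1" "Q*a*b \<noteq> 1" "Q*b*a \<noteq> 1"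
  shows "Sm Q a b * (Q - (1+Q) * ax Q a + ax Q a * ax Q b) + Sm Q b a * (Q - (1+Q) * ax Q b + ax Q a * ax Q b) = 0"
  using assms unfolding Sm_def ax_def by (simp add: divide_simps; (simp add: algebra_simps)?)

lemma free_local:
  assumes "v \<noteq> 1" "Q*v \<noteq> 1"
  shows "(ax Q v)^2 + Q - (1+Q) * ax Q v = eps Q v * ax Q v"
  using assms unfolding eps_def ax_def by (simp add: divide_simps power2_eq_square; (simp add: algebra_simps)?)

lemma eps_iota:
  assumes "Q \<noteq> 0" "v \<noteq> 0" "v \<noteq> 1" "Q*v \<noteq> 1"
  shows "eps Q (iota Q v) = eps Q v"
  using assms unfolding eps_def iota_def by (simp add: divide_simps power2_eq_square; (simp add: algebra_simps)?)

lemma phi_Suc: "k \<ge> 1 \<Longrightarrow> phi q \<alpha> (Suc k) z = phi q \<alpha> k z * ax (of_real q) z"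
  unfolding phi_def ax_def by (cases k) (simp_all add: mult_ac)

lemma sl_insert_max:
  assumes "finite Z" "\<forall>z\<in>Z. z < (m::nat)"
  shows "sorted_list_of_set (insert m Z) = sorted_list_of_set Z @ [m]"
proof -
  have mZ: "m \<notin> Z" using assms by auto
  have "sorted_wrt (<) (sorted_list_of_set Z @ [m])"
    using assms by (simp add: sorted_wrt_append)
  moreover have "set (sorted_list_of_set Z @ [m]) = insert m Z" using assms by simp
  moreover have "length (sorted_list_of_set Z @ [m]) = card (insert m Z)" using assms mZ by simp
  ultimately show ?thesis
    using sorted_list_of_set.sorted_key_list_of_set_unique[of "insert m Z" "sorted_list_of_set Z @ [m]"] assms
    by simp
qed

lemma parts_insert_max:
  assumes "finite Z" "\<forall>z\<in>Z. z < (m::nat)"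
  shows "parts (insert m Z) = m # parts Z"
  using sl_insert_max[OF assms] unfolding parts_def by simp

lemma parts_empty: "parts {} = []" unfolding parts_def by simp

definition cf :: "real \<Rightarrow> real \<Rightarrow> nat \<Rightarrow> complex set \<Rightarrow> complex \<Rightarrow> complex" where
  "cf q \<alpha> y W w = tw (of_real q) (\<lambda>v. phi q \<alpha> y v * Pp (of_real q) v (W - {w})) w"

primrec Hh :: "real \<Rightarrow> real \<Rightarrow> complex set \<Rightarrow> nat list \<Rightarrow> complex" where
  "Hh q \<alpha> W [] = of_real \<alpha> ^ card W"
| "Hh q \<alpha> W (y # ys) = (\<Sum>w\<in>W. cf q \<alpha> y W w * Hh q \<alpha> (W - {w}) ys)"

definition FF :: "real \<Rightarrow> real \<Rightarrow> complex set \<Rightarrow> nat set \<Rightarrow> complex" where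
  "FF q \<alpha> W Z = Hh q \<alpha> W (parts Z)"

lemma FF_empty: "FF q \<alpha> W {} = of_real \<alpha> ^ card W"
  unfolding FF_def parts_empty by simp

lemma FF_ins:
  assumes "finite Z" "\<forall>z\<in>Z. z < (m::nat)"
  shows "FF q \<alpha> W (insert m Z) = (\<Sum>w\<in>W. cf q \<alpha> m W w * FF q \<alpha> (W - {w}) Z)"
  unfolding FF_def parts_insert_max[OF assms] by simp

lemma cf_free:
  fixes q \<alpha> :: real
  assumes q0: "q \<noteq> 0" and gw: "gW (of_real q) W" and w: "w \<in> W" and m: "m \<ge> 2"
  shows "cf q \<alpha> (m+1) W w + of_real q * cf q \<alpha> (m-1) W w - (1 + of_real q) * cf q \<alpha> m W w
       = eps (of_real q) w * cf q \<alpha> m W w"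
proof -
  define Q :: complex where "Q = of_real q"
  have Q0: "Q \<noteq> 0" using q0 unfolding Q_def by simp
  have node: "v \<noteq> 0 \<and> v \<noteq> 1 \<and> Q * v \<noteq> 1" if "v \<in> {w, iota Q w}" for v
    using node_ok[OF gw[folded Q_def] Q0 w that] by simp
  have loc: "phi q \<alpha> (m+1) v + Q * phi q \<alpha> (m-1) v - (1 + Q) * phi q \<alpha> m v = eps Q v * phi q \<alpha> m v"
    if "v \<in> {w, iota Q w}" for v
  proof -
    obtain k where k: "m = Suc k" "k \<ge> 1" using m by (cases m) auto
    have p1: "phi q \<alpha> m v = phi q \<alpha> k v * ax Q v" unfolding k(1) Q_def using phi_Suc[OF k(2)] .
    have p2: "phi q \<alpha> (m+1) v = phi q \<alpha> k v * ax Q v * ax Q v"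
      unfolding k(1) Q_def using phi_Suc[of "Suc k"] phi_Suc[OF k(2)] by simp
    have p3: "phi q \<alpha> (m-1) v = phi q \<alpha> k v" using k by simp
    have "(ax Q v)^2 + Q - (1+Q) * ax Q v = eps Q v * ax Q v"
      using free_local node[OF that] by auto
    then have "phi q \<alpha> k v * (ax Q v * ax Q v + Q - (1+Q) * ax Q v) = phi q \<alpha> k v * (eps Q v * ax Q v)"
      unfolding power2_eq_square by simp
    then show ?thesis unfolding p1 p2 p3 by (simp add: algebra_simps)
  qed
  have ei: "eps Q (iota Q w) = eps Q w" using eps_iota[OF Q0] node[of w] by simp
  define P1 where "P1 = Pp Q w (W - {w})"
  define P2 where "P2 = Pp Q (iota Q w) (W - {w})"
  have "cf q \<alpha> (m+1) W w + Q * cf q \<alpha> (m-1) W w - (1 + Q) * cf q \<alpha> m W w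
     = (phi q \<alpha> (m+1) w + Q * phi q \<alpha> (m-1) w - (1 + Q) * phi q \<alpha> m w) * P1
     + (phi q \<alpha> (m+1) (iota Q w) + Q * phi q \<alpha> (m-1) (iota Q w) - (1 + Q) * phi q \<alpha> m (iota Q w)) * P2"
    unfolding cf_def tw_def Q_def[symmetric] P1_def P2_def by (simp add: algebra_simps)
  also have "\<dots> = eps Q w * (phi q \<alpha> m w * P1 + phi q \<alpha> m (iota Q w) * P2)"
  proof -
    have l1: "phi q \<alpha> (m+1) w = eps Q w * phi q \<alpha> m w - Q * phi q \<alpha> (m-1) w + (1 + Q) * phi q \<alpha> m w"
      using loc[of w] by (simp add: algebra_simps)
    have l2: "phi q \<alpha> (m+1) (iota Q w) = eps Q w * phi q \<alpha> m (iota Q w) - Q * phi q \<alpha> (m-1) (iota Q w) + (1 + Q) * phi q \<alpha> m (iota Q w)"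
      using loc[of "iota Q w"] ei by (simp add: algebra_simps)
    show ?thesis by (simp only: l1 l2) (simp add: algebra_simps)
  qed
  also have "\<dots> = eps Q w * cf q \<alpha> m W w"
    unfolding cf_def tw_def Q_def[symmetric] P1_def P2_def by simp
  finally show ?thesis unfolding Q_def .
qed



definition Psi :: "real \<Rightarrow> real \<Rightarrow> nat \<Rightarrow> complex set \<Rightarrow> complex \<Rightarrow> complex \<Rightarrow> complex" where
  "Psi q \<alpha> m W w w2 =
     of_real q * (cf q \<alpha> (m-1) W w * cf q \<alpha> (m-1) (W - {w}) w2)
   - of_real q * (cf q \<alpha> m W w * cf q \<alpha> (m-1) (W - {w}) w2)
   + cf q \<alpha> m W w * cf q \<alpha> m (W - {w}) w2
   - cf q \<alpha> m W w * cf q \<alpha> (m-1) (W - {w}) w2"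

lemma Pp_remove:
  assumes "finite U" "u \<in> U"
  shows "Pp Q v U = Sm Q v u * Pp Q v (U - {u})"
  unfolding Pp_def using prod.remove[OF assms] .

lemma Psi_antisym:
  fixes q \<alpha> :: real
  assumes q0: "q \<noteq> 0" and gw: "gW (of_real q) W" and m: "m \<ge> 2"
    and w: "w \<in> W" and w2: "w2 \<in> W" and ne: "w \<noteq> w2"
  shows "Psi q \<alpha> m W w w2 + Psi q \<alpha> m W w2 w = 0"
proof -
  define Q :: complex where "Q = of_real q"
  have Q0: "Q \<noteq> 0" using q0 unfolding Q_def by simp
  have gw': "gW Q W" using gw unfolding Q_def .
  have fin: "finite W" using gW_finite[OF gw'] .
  define W2 where "W2 = W - {w} - {w2}"
  have W2': "W - {w2} - {w} = W2" unfolding W2_def by auto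
  define p where "p = phi q \<alpha> (m-1)"
  have pm: "phi q \<alpha> m z = p z * ax Q z" for z
    unfolding p_def Q_def using phi_Suc[of "m-1" q \<alpha> z] m by simp
  define Y where "Y v v2 = Sm Q v v2 * Pp Q v W2 * Pp Q v2 W2 * (p v * p v2 * (Q - (1+Q) * ax Q v + ax Q v * ax Q v2))" for v v2
  have split: "cf q \<alpha> k W a * cf q \<alpha> j (W - {a}) b =
      tw Q (\<lambda>v. tw Q (\<lambda>v2. phi q \<alpha> k v * phi q \<alpha> j v2 * Sm Q v v2 * Pp Q v (W - {a} - {b}) * Pp Q v2 (W - {a} - {b})) b) a"
    if ab: "a \<in> W" "b \<in> W" "a \<noteq> b" for k j a b
  proof -
    have a0: "b \<noteq> 0" using node_ok[OF gw' Q0 ab(2), of b] by simp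
    have pr: "Pp Q v (W - {a}) = Sm Q v b * Pp Q v (W - {a} - {b})" for v
      using Pp_remove[of "W - {a}" b Q v] fin ab by auto
    have si: "Sm Q v (iota Q b) = Sm Q v b" for v using S_iota2[OF Q0 a0] .
    show ?thesis unfolding cf_def tw_def Q_def[symmetric] pr si by (simp add: algebra_simps)
  qed
  have PsiY: "Psi q \<alpha> m W a b = tw Q (\<lambda>v. tw Q (\<lambda>v2. Y v v2) b) a"
    if ab: "a \<in> W" "b \<in> W" "a \<noteq> b" "W - {a} - {b} = W2" for a b
    unfolding Psi_def Q_def[symmetric] split[OF ab(1-3)] ab(4) Y_def tw_def pm p_def[symmetric]
    by (simp add: algebra_simps)
  have Yanti: "Y v v2 + Y v2 v = 0" if "v \<in> {w, iota Q w}" "v2 \<in> {w2, iota Q w2}" for v v2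
  proof -
    have c: "v \<noteq> v2" "Q*v*v2 \<noteq> 1" using node_ok2[OF gw' w w2 ne that] by auto
    have c2: "Q*v2*v \<noteq> 1" using c(2) by (simp add: mult_ac)
    have c3: "v \<noteq> 1" "v2 \<noteq> 1" using node_ok[OF gw' Q0 w that(1)] node_ok[OF gw' Q0 w2 that(2)] by auto
    have "Sm Q v v2 * (Q - (1+Q) * ax Q v + ax Q v * ax Q v2) + Sm Q v2 v * (Q - (1+Q) * ax Q v2 + ax Q v * ax Q v2) = 0"
      using collision_local[OF c(1) c3 c(2) c2] .
    then have "(Pp Q v W2 * Pp Q v2 W2 * p v * p v2) * (Sm Q v v2 * (Q - (1+Q) * ax Q v + ax Q v * ax Q v2) + Sm Q v2 v * (Q - (1+Q) * ax Q v2 + ax Q v * ax Q v2)) = 0"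
      by simp
    then show ?thesis unfolding Y_def by (simp add: algebra_simps)
  qed
  have "Psi q \<alpha> m W w w2 + Psi q \<alpha> m W w2 w = tw Q (\<lambda>v. tw Q (\<lambda>v2. Y v v2) w2) w + tw Q (\<lambda>v2. tw Q (\<lambda>v. Y v2 v) w) w2"
    using PsiY[OF w w2 ne] PsiY[OF w2 w ne[symmetric] W2'] unfolding W2_def by simp
  also have "\<dots> = (Y w w2 + Y w2 w) + (Y w (iota Q w2) + Y (iota Q w2) w) + (Y (iota Q w) w2 + Y w2 (iota Q w))
     + (Y (iota Q w) (iota Q w2) + Y (iota Q w2) (iota Q w))"
    unfolding tw_def by (simp add: algebra_simps)
  also have "\<dots> = 0" using Yanti by simp
  finally show ?thesis .
qed

lemma swap_zero:
  fixes F :: "'a \<Rightarrow> 'a \<Rightarrow> complex"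
  assumes "finite W" "\<And>a b. a \<in> W \<Longrightarrow> b \<in> W \<Longrightarrow> a \<noteq> b \<Longrightarrow> F a b + F b a = 0"
  shows "(\<Sum>a\<in>W. \<Sum>b\<in>W - {a}. F a b) = 0"
proof -
  have "(\<Sum>a\<in>W. \<Sum>b\<in>W - {a}. F a b) = (\<Sum>b\<in>W. \<Sum>a\<in>W - {b}. F a b)"
  proof -
    have "(\<Sum>a\<in>W. \<Sum>b\<in>W - {a}. F a b) = (\<Sum>a\<in>W. \<Sum>b\<in>W. if a = b then 0 else F a b)"
      by (rule sum.cong[OF refl]) (use assms(1) in \<open>simp add: sum.If_cases Diff_eq Int_commute\<close>)
    also have "\<dots> = (\<Sum>b\<in>W. \<Sum>a\<in>W. if a = b then 0 else F a b)" by (rule sum.swap)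
    also have "\<dots> = (\<Sum>b\<in>W. \<Sum>a\<in>W - {b}. F a b)"
      by (rule sum.cong[OF refl]) (use assms(1) in \<open>simp add: sum.If_cases Diff_eq Int_commute\<close>)
    finally show ?thesis .
  qed
  also have "\<dots> = (\<Sum>b\<in>W. \<Sum>a\<in>W - {b}. - F b a)"
    by (rule sum.cong[OF refl], rule sum.cong[OF refl]) (use assms(2) in \<open>auto simp: eq_neg_iff_add_eq_0 add.commute\<close>)
  also have "\<dots> = - (\<Sum>a\<in>W. \<Sum>b\<in>W - {a}. F a b)" by (simp add: sum_negf)
  finally show ?thesis by simp
qed



definition mvx :: "complex \<Rightarrow> (nat set \<Rightarrow> complex) \<Rightarrow> nat set \<Rightarrow> nat \<Rightarrow> complex" where
  "mvx Q F y x = (if x + 1 \<notin> y then F (insert (x + 1) (y - {x})) - F y else 0)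
     + (if 2 \<le> x \<and> x - 1 \<notin> y then Q * (F (insert (x - 1) (y - {x})) - F y) else 0)"

definition Lg :: "complex \<Rightarrow> complex \<Rightarrow> (nat set \<Rightarrow> complex) \<Rightarrow> nat set \<Rightarrow> complex" where
  "Lg Q A F y = (\<Sum>x\<in>y. mvx Q F y x) + (if 1 \<notin> y then A * (F (insert 1 y) - F y) else 0)"

lemma Lg_lin:
  assumes "finite W"
  shows "Lg Q A (\<lambda>Z. \<Sum>w\<in>W. c w * G w Z) y = (\<Sum>w\<in>W. c w * Lg Q A (G w) y)"
proof -
  have m: "mvx Q (\<lambda>Z. \<Sum>w\<in>W. c w * G w Z) y x = (\<Sum>w\<in>W. c w * mvx Q (G w) y x)" for x
    unfolding mvx_def
    by (cases "x + 1 \<notin> y"; cases "2 \<le> x \<and> x - 1 \<notin> y")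
      (simp_all only: if_True if_False, simp_all add: sum.distrib sum_subtractf sum_distrib_left algebra_simps)
  have "(\<Sum>x\<in>y. \<Sum>w\<in>W. c w * mvx Q (G w) y x) = (\<Sum>w\<in>W. c w * (\<Sum>x\<in>y. mvx Q (G w) y x))"
    by (subst sum.swap) (simp add: sum_distrib_left)
  then show ?thesis unfolding Lg_def m
    by (simp add: sum.distrib sum_subtractf sum_distrib_left algebra_simps)
qed

lemma Lg_split:
  fixes m :: nat
  assumes fin: "finite Y'" and lt: "\<forall>z\<in>Y'. z < m" and m2: "m \<ge> 2"
    and FR: "\<And>Z. finite Z \<Longrightarrow> \<forall>z\<in>Z. z < m \<Longrightarrow> F (insert m Z) = R Z"
  shows "Lg Q A F (insert m Y') = mvx Q F (insert m Y') m + Lg Q A R Y'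
     - (if m - 1 \<in> Y' then R (insert m (Y' - {m - 1})) - R Y' else 0)"
proof -
  define Y where "Y = insert m Y'"
  have mY: "m \<notin> Y'" using lt by auto
  have FY: "F Y = R Y'" unfolding Y_def using FR[OF fin lt] .
  have px: "mvx Q F Y x = mvx Q R Y' x - (if x = m - 1 then R (insert m (Y' - {x})) - R Y' else 0)"
    if x: "x \<in> Y'" for x
  proof -
    have xm: "x < m" using lt x by auto
    have e1: "insert (x + 1) (Y - {x}) = insert m (insert (x + 1) (Y' - {x}))" unfolding Y_def using xm by auto
    have e2: "insert (x - 1) (Y - {x}) = insert m (insert (x - 1) (Y' - {x}))" unfolding Y_def using xm by auto
    have l2: "2 \<le> x \<and> x - 1 \<notin> Y \<longleftrightarrow> 2 \<le> x \<and> x - 1 \<notin> Y'" unfolding Y_def using xm by auto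
    have L: "(if 2 \<le> x \<and> x - 1 \<notin> Y then Q * (F (insert (x - 1) (Y - {x})) - F Y) else 0)
        = (if 2 \<le> x \<and> x - 1 \<notin> Y' then Q * (R (insert (x - 1) (Y' - {x})) - R Y') else 0)"
    proof (cases "2 \<le> x \<and> x - 1 \<notin> Y'")
      case True
      have "F (insert (x - 1) (Y - {x})) = R (insert (x - 1) (Y' - {x}))"
        unfolding e2 by (rule FR) (use fin lt xm in auto)
      then show ?thesis using True l2 FY by simp
    next
      case False
      then have "\<not> (2 \<le> x \<and> x - 1 \<notin> Y)" using l2 by blast
      then show ?thesis using False by (simp only: if_False)
    qed
    show ?thesis
    proof (cases "x = m - 1")
      case True
      then have "x + 1 \<in> Y" "x + 1 \<notin> Y'" unfolding Y_def using m2 mY by auto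
      moreover have "x + 1 = m" using True m2 by simp
      ultimately show ?thesis unfolding mvx_def L using True by simp
    next
      case False
      then have xx: "x + 1 \<noteq> m" using xm by auto
      have r1: "x + 1 \<notin> Y \<longleftrightarrow> x + 1 \<notin> Y'" unfolding Y_def using xx by auto
      have r2: "F (insert (x + 1) (Y - {x})) = R (insert (x + 1) (Y' - {x}))"
        unfolding e1 by (rule FR) (use fin lt xm xx in auto)
      show ?thesis unfolding mvx_def L using False r1 r2 FY by simp
    qed
  qed
  have sx: "(\<Sum>x\<in>Y'. mvx Q F Y x) = (\<Sum>x\<in>Y'. mvx Q R Y' x)
       - (if m - 1 \<in> Y' then R (insert m (Y' - {m - 1})) - R Y' else 0)"
  proof -
    have "(\<Sum>x\<in>Y'. mvx Q F Y x) = (\<Sum>x\<in>Y'. mvx Q R Y' x)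
       - (\<Sum>x\<in>Y'. (if x = m - 1 then R (insert m (Y' - {x})) - R Y' else 0))"
      using px by (simp add: sum_subtractf)
    also have "(\<Sum>x\<in>Y'. (if x = m - 1 then R (insert m (Y' - {x})) - R Y' else 0))
       = (if m - 1 \<in> Y' then R (insert m (Y' - {m - 1})) - R Y' else 0)"
      using fin by (simp add: sum.delta)
    finally show ?thesis .
  qed
  have ent: "(if 1 \<notin> Y then A * (F (insert 1 Y) - F Y) else 0) = (if 1 \<notin> Y' then A * (R (insert 1 Y') - R Y') else 0)"
  proof -
    have i1: "1 \<notin> Y \<longleftrightarrow> 1 \<notin> Y'" unfolding Y_def using m2 by auto
    have "insert 1 Y = insert m (insert 1 Y')" unfolding Y_def by auto
    then have "F (insert 1 Y) = R (insert 1 Y')" using FR[of "insert 1 Y'"] fin lt m2 by auto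
    then show ?thesis using i1 FY by simp
  qed
  have "Lg Q A F Y = mvx Q F Y m + (\<Sum>x\<in>Y'. mvx Q F Y x) + (if 1 \<notin> Y then A * (F (insert 1 Y) - F Y) else 0)"
    unfolding Lg_def Y_def using fin mY by simp
  then show ?thesis unfolding sx ent Lg_def Y_def[symmetric] by simp
qed



lemma EW_remove: "finite W \<Longrightarrow> w \<in> W \<Longrightarrow> EW Q (W - {w}) + eps Q w = EW Q W"
  unfolding EW_def by (simp add: sum.remove)

lemma sum_cf: "(\<Sum>w\<in>W. cf q \<alpha> y W w) = Tsum (of_real q) (phi q \<alpha> y) W"
  unfolding Tsum_def cf_def ..

lemma FF_single:
  assumes "finite W" "W \<noteq> {}"
  shows "FF q \<alpha> W {k} = of_real \<alpha> ^ (card W - 1) * Tsum (of_real q) (phi q \<alpha> k) W"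
proof -
  have "FF q \<alpha> W {k} = (\<Sum>w\<in>W. cf q \<alpha> k W w * FF q \<alpha> (W - {w}) {})"
    using FF_ins[of "{}" k q \<alpha> W] by simp
  also have "\<dots> = (\<Sum>w\<in>W. cf q \<alpha> k W w * of_real \<alpha> ^ (card W - 1))"
    by (rule sum.cong[OF refl]) (use assms in \<open>simp add: FF_empty\<close>)
  finally show ?thesis unfolding sum_cf[symmetric] by (simp add: sum_distrib_right mult.commute)
qed

lemma FF_single0: "FF q \<alpha> {} {k} = 0"
  using FF_ins[of "{}" k q \<alpha> "{}"] by simp

lemma collision_D:
  fixes q \<alpha> :: real
  assumes q0: "q \<noteq> 0" and gw: "gW (of_real q) W" and m: "m \<ge> 2"
    and fZ: "finite Z" and ltZ: "\<forall>z\<in>Z. z < m - 1"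
  shows "of_real q * ((\<Sum>w\<in>W. cf q \<alpha> (m-1) W w * FF q \<alpha> (W - {w}) (insert (m-1) Z))
                     - (\<Sum>w\<in>W. cf q \<alpha> m W w * FF q \<alpha> (W - {w}) (insert (m-1) Z)))
       + ((\<Sum>w\<in>W. cf q \<alpha> m W w * FF q \<alpha> (W - {w}) (insert m Z))
          - (\<Sum>w\<in>W. cf q \<alpha> m W w * FF q \<alpha> (W - {w}) (insert (m-1) Z))) = 0"
proof -
  have fin: "finite W" using gW_finite[OF gw] .
  define G where "G a b = FF q \<alpha> (W - {a} - {b}) Z" for a b
  have ltZ2: "\<forall>z\<in>Z. z < m" using ltZ by auto
  have e1: "FF q \<alpha> (W - {w}) (insert (m-1) Z) = (\<Sum>w2\<in>W - {w}. cf q \<alpha> (m-1) (W - {w}) w2 * G w w2)" for w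
    unfolding G_def using FF_ins[OF fZ ltZ] .
  have e2: "FF q \<alpha> (W - {w}) (insert m Z) = (\<Sum>w2\<in>W - {w}. cf q \<alpha> m (W - {w}) w2 * G w w2)" for w
    unfolding G_def using FF_ins[OF fZ ltZ2] .
  have "of_real q * ((\<Sum>w\<in>W. cf q \<alpha> (m-1) W w * FF q \<alpha> (W - {w}) (insert (m-1) Z))
                     - (\<Sum>w\<in>W. cf q \<alpha> m W w * FF q \<alpha> (W - {w}) (insert (m-1) Z)))
       + ((\<Sum>w\<in>W. cf q \<alpha> m W w * FF q \<alpha> (W - {w}) (insert m Z))
          - (\<Sum>w\<in>W. cf q \<alpha> m W w * FF q \<alpha> (W - {w}) (insert (m-1) Z)))
     = (\<Sum>w\<in>W. \<Sum>w2\<in>W - {w}. Psi q \<alpha> m W w w2 * G w w2)"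
    unfolding e1 e2 Psi_def
    by (simp add: sum_distrib_left sum_subtractf sum.distrib algebra_simps)
  also have "\<dots> = 0"
  proof (rule swap_zero[OF fin])
    fix a b assume ab: "a \<in> W" "b \<in> W" "a \<noteq> b"
    have "G b a = G a b" unfolding G_def by (metis Diff_insert2 insert_commute)
    then show "Psi q \<alpha> m W a b * G a b + Psi q \<alpha> m W b a * G b a = 0"
      using Psi_antisym[OF q0 gw m ab] by (simp add: distrib_right[symmetric])
  qed
  finally show ?thesis .
qed


lemma main_step:
  fixes q \<alpha> :: real
  assumes q0: "q \<noteq> 0" and gw: "gW (of_real q) W" and m2: "m \<ge> 2"
    and fY: "finite Y'" and lt: "\<forall>z\<in>Y'. z < m"
    and IH: "\<And>w. w \<in> W \<Longrightarrow> Lg (of_real q) (of_real \<alpha>) (FF q \<alpha> (W - {w})) Y'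
               = (EW (of_real q) (W - {w}) - of_real \<alpha>) * FF q \<alpha> (W - {w}) Y'"
  shows "Lg (of_real q) (of_real \<alpha>) (FF q \<alpha> W) (insert m Y')
       = (EW (of_real q) W - of_real \<alpha>) * FF q \<alpha> W (insert m Y')"
proof -
  define Q :: complex where "Q = of_real q"
  define Al :: complex where "Al = of_real \<alpha>"
  have fin: "finite W" using gW_finite[OF gw] .
  define Rec where "Rec Z = (\<Sum>w\<in>W. cf q \<alpha> m W w * FF q \<alpha> (W - {w}) Z)" for Z
  define Rk where "Rk k = (\<Sum>w\<in>W. cf q \<alpha> k W w * FF q \<alpha> (W - {w}) Y')" for k
  have FR: "FF q \<alpha> W (insert m Z) = Rec Z" if "finite Z" "\<forall>z\<in>Z. z < m" for Z
    unfolding Rec_def using FF_ins[OF that] .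
  have split: "Lg Q Al (FF q \<alpha> W) (insert m Y') = mvx Q (FF q \<alpha> W) (insert m Y') m + Lg Q Al Rec Y'
     - (if m - 1 \<in> Y' then Rec (insert m (Y' - {m - 1})) - Rec Y' else 0)"
    by (rule Lg_split[where F="FF q \<alpha> W" and R=Rec, OF fY lt m2 FR])
  have LRec: "Lg Q Al Rec Y' = (\<Sum>w\<in>W. cf q \<alpha> m W w * ((EW Q (W - {w}) - Al) * FF q \<alpha> (W - {w}) Y'))"
    unfolding Rec_def Lg_lin[OF fin] using IH unfolding Q_def Al_def by simp
  have mY: "m \<notin> Y'" "m + 1 \<notin> insert m Y'" using lt by auto
  have YmY: "insert m Y' - {m} = Y'" using mY by auto
  have Fm1: "FF q \<alpha> W (insert (m + 1) Y') = Rk (m+1)"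
  proof -
    have "\<forall>z\<in>Y'. z < m + 1" using lt by auto
    then show ?thesis unfolding Rk_def using FF_ins[OF fY, of "m+1"] by blast
  qed
  have Fm: "FF q \<alpha> W (insert m Y') = Rk m" unfolding Rk_def using FR[OF fY lt] Rec_def by simp
  have free: "Rk (m+1) + Q * Rk (m-1) - (1 + Q) * Rk m
       = (\<Sum>w\<in>W. eps Q w * cf q \<alpha> m W w * FF q \<alpha> (W - {w}) Y')"
  proof -
    have "Rk (m+1) + Q * Rk (m-1) - (1 + Q) * Rk m
       = (\<Sum>w\<in>W. (cf q \<alpha> (m+1) W w + Q * cf q \<alpha> (m-1) W w - (1 + Q) * cf q \<alpha> m W w) * FF q \<alpha> (W - {w}) Y')"
      unfolding Rk_def by (simp add: sum_distrib_left sum_subtractf sum.distrib algebra_simps)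
    also have "\<dots> = (\<Sum>w\<in>W. eps Q w * cf q \<alpha> m W w * FF q \<alpha> (W - {w}) Y')"
      by (rule sum.cong[OF refl]) (use cf_free[OF q0 gw _ m2] in \<open>simp add: Q_def\<close>)
    finally show ?thesis .
  qed
  have main: "(\<Sum>w\<in>W. eps Q w * cf q \<alpha> m W w * FF q \<alpha> (W - {w}) Y')
      + (\<Sum>w\<in>W. cf q \<alpha> m W w * ((EW Q (W - {w}) - Al) * FF q \<alpha> (W - {w}) Y'))
      = (EW Q W - Al) * Rk m"
  proof -
    have "(\<Sum>w\<in>W. eps Q w * cf q \<alpha> m W w * FF q \<alpha> (W - {w}) Y')
      + (\<Sum>w\<in>W. cf q \<alpha> m W w * ((EW Q (W - {w}) - Al) * FF q \<alpha> (W - {w}) Y'))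
      = (\<Sum>w\<in>W. (EW Q (W - {w}) + eps Q w - Al) * (cf q \<alpha> m W w * FF q \<alpha> (W - {w}) Y'))"
      by (simp add: sum.distrib[symmetric] algebra_simps)
    also have "\<dots> = (\<Sum>w\<in>W. (EW Q W - Al) * (cf q \<alpha> m W w * FF q \<alpha> (W - {w}) Y'))"
      by (rule sum.cong[OF refl]) (use EW_remove[OF fin] in simp)
    also have "\<dots> = (EW Q W - Al) * Rk m" unfolding Rk_def by (simp add: sum_distrib_left)
    finally show ?thesis .
  qed
  show ?thesis
  proof (cases "m - 1 \<in> Y'")
    case False
    have ltm1: "\<forall>z\<in>Y'. z < m - 1" using lt False by (metis Suc_pred' le_less_Suc_eq less_imp_le_nat
          nat_less_le not_less_eq zero_less_iff_neq_zero zero_less_diff m2 diff_is_0_eq)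
    have Fmm: "FF q \<alpha> W (insert (m - 1) Y') = Rk (m-1)"
      unfolding Rk_def using FF_ins[OF fY ltm1] .
    have mv: "mvx Q (FF q \<alpha> W) (insert m Y') m = (Rk (m+1) - Rk m) + Q * (Rk (m-1) - Rk m)"
      unfolding mvx_def YmY using mY m2 False Fm1 Fm Fmm by simp
    have "Lg Q Al (FF q \<alpha> W) (insert m Y') = (Rk (m+1) + Q * Rk (m-1) - (1 + Q) * Rk m) + Lg Q Al Rec Y'"
      unfolding split mv using False by (simp add: algebra_simps)
    then show ?thesis unfolding free LRec main Fm Q_def[symmetric] Al_def[symmetric] by simp
  next
    case True
    define Z where "Z = Y' - {m - 1}"
    have YZ: "Y' = insert (m - 1) Z" unfolding Z_def using True by auto
    have fZ: "finite Z" unfolding Z_def using fY by simp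
    have ltZ: "\<forall>z\<in>Z. z < m - 1" unfolding Z_def using lt by auto
    have mv: "mvx Q (FF q \<alpha> W) (insert m Y') m = Rk (m+1) - Rk m"
      unfolding mvx_def YmY using mY m2 True Fm1 Fm by simp
    have D: "Q * (Rk (m-1) - Rk m) + (Rec (insert m Z) - Rec Y') = 0"
      using collision_D[OF q0 gw m2 fZ ltZ, of \<alpha>] unfolding Rk_def Rec_def YZ[symmetric] Q_def .
    have "Lg Q Al (FF q \<alpha> W) (insert m Y') = (Rk (m+1) + Q * Rk (m-1) - (1 + Q) * Rk m) + Lg Q Al Rec Y'
        - (Q * (Rk (m-1) - Rk m) + (Rec (insert m Z) - Rec Y'))"
      unfolding split mv using True Z_def by (simp add: algebra_simps)
    then show ?thesis unfolding free LRec main Fm D Q_def[symmetric] Al_def[symmetric] by simp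
  qed
qed


lemma Max_in_config:
  fixes Y :: "nat set"
  assumes "finite Y" "Y \<noteq> {}" "0 \<notin> Y" "Max Y = 1"
  shows "Y = {1}"
proof -
  have "\<forall>y\<in>Y. y \<le> 1" using assms Max_ge by metis
  have "Y \<subseteq> {1}"
  proof
    fix x assume "x \<in> Y"
    then have "x \<le> 1" using \<open>\<forall>y\<in>Y. y \<le> 1\<close> by auto
    moreover have "x \<noteq> 0" using \<open>x \<in> Y\<close> assms(3) by metis
    ultimately show "x \<in> {1}" by simp
  qed
  then show ?thesis using assms(2) by auto
qed

theorem MT:
  fixes q \<alpha> :: real
  assumes q0: "q \<noteq> 0" and q1: "q \<noteq> 1"
  shows "gW (of_real q) W \<Longrightarrow> finite Y \<Longrightarrow> 0 \<notin> Y \<Longrightarrow> card Y \<le> card W \<Longrightarrow>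
    Lg (of_real q) (of_real \<alpha>) (FF q \<alpha> W) Y = (EW (of_real q) W - of_real \<alpha>) * FF q \<alpha> W Y"
proof (induction "card Y" arbitrary: Y W rule: less_induct)
  case less
  define Q :: complex where "Q = of_real q"
  define Al :: complex where "Al = of_real \<alpha>"
  have fin: "finite W" using gW_finite[OF less.prems(1)] .
  show ?case
  proof (cases "Y = {}")
    case True
    have L: "Lg Q Al (FF q \<alpha> W) {} = Al * (FF q \<alpha> W {1} - FF q \<alpha> W {})"
      unfolding Lg_def by simp
    have F0: "FF q \<alpha> W {} = Al ^ card W" unfolding Al_def by (rule FF_empty)
    show ?thesis
    proof (cases "W = {}")
      case True
      then show ?thesis using L \<open>Y = {}\<close> FF_single0 F0 unfolding Q_def[symmetric] Al_def[symmetric] EW_def by simp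
    next
      case False
      then have n: "card W \<ge> 1" using fin by (simp add: Suc_le_eq card_gt_0_iff)
      have "FF q \<alpha> W {1} = Al ^ (card W - 1) * EW Q W"
        using FF_single[OF fin False] I1[OF q0 q1 less.prems(1)] unfolding Q_def Al_def by simp
      moreover have "Al * Al ^ (card W - 1) = Al ^ card W" using n by (metis Suc_diff_le diff_Suc_1 power_Suc)
      ultimately show ?thesis using L \<open>Y = {}\<close> F0 unfolding Q_def[symmetric] Al_def[symmetric]
        by (simp add: algebra_simps)
    qed
  next
    case False
    define m where "m = Max Y"
    have mY: "m \<in> Y" unfolding m_def using Max_in[OF less.prems(2) False] .
    have m0: "m \<ge> 1" using mY less.prems(3) by (cases m) auto
    have WnE: "W \<noteq> {}" using less.prems(4) False less.prems(2) by auto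
    show ?thesis
    proof (cases "m = 1")
      case True
      have Y1: "Y = {1}" using Max_in_config[OF less.prems(2) False less.prems(3)] True m_def by simp
      have L: "Lg Q Al (FF q \<alpha> W) {1} = FF q \<alpha> W {2} - FF q \<alpha> W {1}"
        unfolding Lg_def mvx_def by (simp add: insert_commute numeral_2_eq_2)
      have T1: "FF q \<alpha> W {1} = Al ^ (card W - 1) * EW Q W"
        using FF_single[OF fin WnE] I1[OF q0 q1 less.prems(1)] unfolding Q_def Al_def by simp
      have T2: "FF q \<alpha> W {2} = Al ^ (card W - 1) * ((EW Q W)^2 + (1 - Al) * EW Q W)"
        using FF_single[OF fin WnE] I2[OF q0 q1 less.prems(1)] unfolding Q_def Al_def by simp
      show ?thesis unfolding Y1 Q_def[symmetric] Al_def[symmetric] L T1 T2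
        by (simp add: algebra_simps power2_eq_square)
    next
      case False
      then have m2: "m \<ge> 2" using m0 by simp
      define Y' where "Y' = Y - {m}"
      have YY: "Y = insert m Y'" unfolding Y'_def using mY by auto
      have fY: "finite Y'" unfolding Y'_def using less.prems(2) by simp
      have lt: "\<forall>z\<in>Y'. z < m" unfolding Y'_def m_def using less.prems(2)
        by (metis DiffD1 DiffD2 Max_ge le_neq_implies_less singletonI)
      have cY: "card Y' < card Y" unfolding Y'_def using mY less.prems(2) by (meson card_Diff1_less)
      have IH: "Lg Q Al (FF q \<alpha> (W - {w})) Y' = (EW Q (W - {w}) - Al) * FF q \<alpha> (W - {w}) Y'" if w: "w \<in> W" for w
      proof -
        have g: "gW Q (W - {w})" using gW_subset[OF less.prems(1)] unfolding Q_def by blast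
        have "card Y' \<le> card (W - {w})"
          using less.prems(4) cY w fin by (simp add: card_Diff_singleton)
        then show ?thesis using less.hyps[OF cY g[unfolded Q_def] fY] less.prems(3)
          unfolding Y'_def Q_def Al_def by auto
      qed
      show ?thesis unfolding YY
        by (rule main_step[OF q0 less.prems(1) m2 fY lt]) (use IH in \<open>simp add: Q_def Al_def\<close>)
    qed
  qed
qed



definition Rset :: "nat set \<Rightarrow> nat set" where "Rset y = {x\<in>y. x + 1 \<notin> y}"
definition Lset :: "nat set \<Rightarrow> nat set" where "Lset y = {x\<in>y. 2 \<le> x \<and> x - 1 \<notin> y}"
definition mR :: "nat set \<Rightarrow> nat \<Rightarrow> nat set" where "mR y x = insert (x + 1) (y - {x})"
definition mL :: "nat set \<Rightarrow> nat \<Rightarrow> nat set" where "mL y x = insert (x - 1) (y - {x})"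
definition Eset :: "nat set \<Rightarrow> nat set set" where "Eset y = (if 1 \<notin> y then {insert 1 y} else {})"

lemma notin_mR: "x \<notin> mR y x" unfolding mR_def by auto
lemma notin_mL: "2 \<le> x \<Longrightarrow> x \<notin> mL y x" unfolding mL_def by auto

lemma mR_ne_mL:
  assumes "x \<in> Rset y" "x' \<in> Lset y"
  shows "mR y x \<noteq> mL y x'"
proof
  assume eq: "mR y x = mL y x'"
  have x'y: "x' \<in> y" "2 \<le> x'" "x' - 1 \<notin> y" using assms(2) unfolding Lset_def by auto
  have xy: "x \<in> y" "x + 1 \<notin> y" using assms(1) unfolding Rset_def by auto
  have "x' \<notin> mL y x'" using notin_mL[OF x'y(2)] .
  then have "x' \<notin> mR y x" using eq by simp
  then have "x' = x" using x'y(1) xy unfolding mR_def by auto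
  have "x + 1 \<in> mL y x'" using eq unfolding mR_def by auto
  then show False using xy(2) \<open>x' = x\<close> x'y(2) unfolding mL_def by auto
qed

lemma mR_ne_ins1: "x \<in> y \<Longrightarrow> mR y x \<noteq> insert 1 y"
  using notin_mR[of x y] by auto

lemma mL_ne_ins1: "x \<in> y \<Longrightarrow> 2 \<le> x \<Longrightarrow> mL y x \<noteq> insert 1 y"
  using notin_mL[of x y] by auto

lemma mR_ne_y: "x \<in> Rset y \<Longrightarrow> mR y x \<noteq> y"
  unfolding Rset_def mR_def by auto

lemma mL_ne_y: "x \<in> Lset y \<Longrightarrow> mL y x \<noteq> y"
  unfolding Lset_def mL_def by auto

lemma inj_mR: "inj_on (mR y) (Rset y)"
proof (rule inj_onI)
  fix x x' assume a: "x \<in> Rset y" "x' \<in> Rset y" "mR y x = mR y x'"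
  show "x = x'"
  proof (rule ccontr)
    assume "x \<noteq> x'"
    then have "x \<in> mR y x'" using a(1) unfolding mR_def Rset_def by auto
    then show False using a(3) notin_mR[of x y] by simp
  qed
qed

lemma inj_mL: "inj_on (mL y) (Lset y)"
proof (rule inj_onI)
  fix x x' assume a: "x \<in> Lset y" "x' \<in> Lset y" "mL y x = mL y x'"
  show "x = x'"
  proof (rule ccontr)
    assume "x \<noteq> x'"
    then have "x \<in> mL y x'" using a(1) unfolding mL_def Lset_def by auto
    then show False using a(3) notin_mL[of x y] a(1) unfolding Lset_def by simp
  qed
qed

lemma rate_R:
  assumes "x \<in> Rset y"
  shows "rate q \<alpha> y (mR y x) = 1"
proof -
  have c1: "\<exists>x'\<in>y. x' + 1 \<notin> y \<and> mR y x = insert (x' + 1) (y - {x'})"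
    using assms unfolding Rset_def mR_def by (intro bexI[of _ x]) auto
  have c2: "\<not> (\<exists>x'\<in>y. x' \<ge> 2 \<and> x' - 1 \<notin> y \<and> mR y x = insert (x' - 1) (y - {x'}))"
    using mR_ne_mL[OF assms] unfolding Lset_def mL_def by auto
  have c3: "mR y x \<noteq> insert 1 y" using mR_ne_ins1 assms unfolding Rset_def by auto
  have c3': "\<not> (1 \<notin> y \<and> mR y x = insert 1 y)" using c3 by simp
  show ?thesis unfolding rate_def if_P[OF c1] if_not_P[OF c2] if_not_P[OF c3'] by simp
qed

lemma rate_L:
  assumes "x \<in> Lset y"
  shows "rate q \<alpha> y (mL y x) = q"
proof -
  have c1: "\<not> (\<exists>x'\<in>y. x' + 1 \<notin> y \<and> mL y x = insert (x' + 1) (y - {x'}))"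
    using mR_ne_mL[OF _ assms] unfolding Rset_def mR_def by auto
  have c2: "\<exists>x'\<in>y. x' \<ge> 2 \<and> x' - 1 \<notin> y \<and> mL y x = insert (x' - 1) (y - {x'})"
    using assms unfolding Lset_def mL_def by (intro bexI[of _ x]) auto
  have c3: "mL y x \<noteq> insert 1 y" using mL_ne_ins1 assms unfolding Lset_def by auto
  have c3': "\<not> (1 \<notin> y \<and> mL y x = insert 1 y)" using c3 by simp
  show ?thesis unfolding rate_def if_not_P[OF c1] if_P[OF c2] if_not_P[OF c3'] by simp
qed

lemma rate_E:
  assumes "1 \<notin> y"
  shows "rate q \<alpha> y (insert 1 y) = \<alpha>"
proof -
  have c1: "\<not> (\<exists>x'\<in>y. x' + 1 \<notin> y \<and> insert 1 y = insert (x' + 1) (y - {x'}))"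
    using mR_ne_ins1 unfolding mR_def by metis
  have c2: "\<not> (\<exists>x'\<in>y. x' \<ge> 2 \<and> x' - 1 \<notin> y \<and> insert 1 y = insert (x' - 1) (y - {x'}))"
    using mL_ne_ins1 unfolding mL_def by metis
  have c3: "1 \<notin> y \<and> insert 1 y = insert 1 y" using assms by simp
  show ?thesis unfolding rate_def if_not_P[OF c1] if_not_P[OF c2] if_P[OF c3] by simp
qed

definition Cs :: "nat set \<Rightarrow> nat set set" where
  "Cs y = mR y ` Rset y \<union> mL y ` Lset y \<union> Eset y"

lemma rate_nz_Cs: "rate q \<alpha> y z \<noteq> 0 \<Longrightarrow> z \<in> Cs y"
proof (rule ccontr)
  assume r: "rate q \<alpha> y z \<noteq> 0" and z: "z \<notin> Cs y"
  have n1: "\<not> (\<exists>x\<in>y. x + 1 \<notin> y \<and> z = insert (x + 1) (y - {x}))"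
  proof
    assume "\<exists>x\<in>y. x + 1 \<notin> y \<and> z = insert (x + 1) (y - {x})"
    then obtain x where "x \<in> Rset y" "z = mR y x" unfolding Rset_def mR_def by auto
    then show False using z unfolding Cs_def by auto
  qed
  have n2: "\<not> (\<exists>x\<in>y. x \<ge> 2 \<and> x - 1 \<notin> y \<and> z = insert (x - 1) (y - {x}))"
  proof
    assume "\<exists>x\<in>y. x \<ge> 2 \<and> x - 1 \<notin> y \<and> z = insert (x - 1) (y - {x})"
    then obtain x where "x \<in> Lset y" "z = mL y x" unfolding Lset_def mL_def by auto
    then show False using z unfolding Cs_def by auto
  qed
  have n3: "\<not> (1 \<notin> y \<and> z = insert 1 y)" using z unfolding Cs_def Eset_def by auto
  show False using r unfolding rate_def if_not_P[OF n1] if_not_P[OF n2] if_not_P[OF n3] by simp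
qed

lemma finite_Cs: "finite y \<Longrightarrow> finite (Cs y)"
  unfolding Cs_def Rset_def Lset_def Eset_def by auto

lemma config_Cs:
  assumes "is_config y" "z \<in> Cs y"
  shows "is_config z"
proof -
  have fy: "finite y" "0 \<notin> y" using assms(1) unfolding is_config_def by auto
  consider (R) x where "x \<in> Rset y" "z = mR y x" | (L) x where "x \<in> Lset y" "z = mL y x"
    | (E) "z = insert 1 y"
    using assms(2) unfolding Cs_def Eset_def by (auto split: if_splits)
  then show ?thesis
  proof cases
    case R then show ?thesis using fy unfolding is_config_def mR_def by auto
  next
    case L
    then have "x - 1 \<noteq> 0" unfolding Lset_def by auto
    then show ?thesis using fy L unfolding is_config_def mL_def by auto
  next
    case E then show ?thesis using fy unfolding is_config_def by auto
  qed
qed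

lemma y_notin_Cs: "y \<notin> Cs y"
proof
  assume "y \<in> Cs y"
  then consider (R) x where "x \<in> Rset y" "y = mR y x" | (L) x where "x \<in> Lset y" "y = mL y x"
    | (E) "1 \<notin> y" "y = insert 1 y"
    unfolding Cs_def Eset_def by (auto split: if_splits)
  then show False
  proof cases
    case R then show False using mR_ne_y by metis
  next
    case L then show False using mL_ne_y by metis
  next
    case E then show False by auto
  qed
qed

lemma sum_Cs:
  fixes g :: "nat set \<Rightarrow> 'a::comm_monoid_add"
  assumes "finite y"
  shows "sum g (Cs y) = (\<Sum>x\<in>Rset y. g (mR y x)) + (\<Sum>x\<in>Lset y. g (mL y x)) + (if 1 \<notin> y then g (insert 1 y) else 0)"
proof -
  have fR: "finite (mR y ` Rset y)" "finite (mL y ` Lset y)" "finite (Eset y)"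
    using assms unfolding Rset_def Lset_def Eset_def by auto
  have d1: "mR y ` Rset y \<inter> mL y ` Lset y = {}" using mR_ne_mL by blast
  have d2: "(mR y ` Rset y \<union> mL y ` Lset y) \<inter> Eset y = {}"
  proof -
    have "insert 1 y \<notin> mR y ` Rset y"
    proof
      assume "insert 1 y \<in> mR y ` Rset y"
      then obtain x where "x \<in> Rset y" "insert 1 y = mR y x" by auto
      then show False using mR_ne_ins1[of x y] unfolding Rset_def by auto
    qed
    moreover have "insert 1 y \<notin> mL y ` Lset y"
    proof
      assume "insert 1 y \<in> mL y ` Lset y"
      then obtain x where "x \<in> Lset y" "insert 1 y = mL y x" by auto
      then show False using mL_ne_ins1[of x y] unfolding Lset_def by auto
    qed
    ultimately show ?thesis unfolding Eset_def by auto
  qed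
  have "sum g (Cs y) = sum g (mR y ` Rset y) + sum g (mL y ` Lset y) + sum g (Eset y)"
    unfolding Cs_def using fR d1 d2 by (simp add: sum.union_disjoint)
  also have "sum g (mR y ` Rset y) = (\<Sum>x\<in>Rset y. g (mR y x))" using sum.reindex[OF inj_mR] by simp
  also have "sum g (mL y ` Lset y) = (\<Sum>x\<in>Lset y. g (mL y x))" using sum.reindex[OF inj_mL] by simp
  also have "sum g (Eset y) = (if 1 \<notin> y then g (insert 1 y) else 0)" unfolding Eset_def by simp
  finally show ?thesis .
qed

lemma gen_sum:
  fixes F :: "nat set \<Rightarrow> complex"
  assumes cy: "is_config y"
  shows "(\<Sum>y'\<in>{y'. is_config y' \<and> gen q \<alpha> y y' \<noteq> 0}. of_real (gen q \<alpha> y y') * F y')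
       = Lg (of_real q) (of_real \<alpha>) F y"
proof -
  have fy: "finite y" using cy unfolding is_config_def by simp
  define C where "C = insert y (Cs y)"
  have fC: "finite C" unfolding C_def using finite_Cs[OF fy] by simp
  have genC: "gen q \<alpha> y z = rate q \<alpha> y z" if "z \<in> Cs y" for z
    using that y_notin_Cs unfolding gen_def by auto
  have sub: "{y'. is_config y' \<and> gen q \<alpha> y y' \<noteq> 0} \<subseteq> C"
  proof
    fix z assume z: "z \<in> {y'. is_config y' \<and> gen q \<alpha> y y' \<noteq> 0}"
    show "z \<in> C"
    proof (cases "z = y")
      case False
      then have "rate q \<alpha> y z \<noteq> 0" using z unfolding gen_def by auto
      then show ?thesis unfolding C_def using rate_nz_Cs by blast
    qed (simp add: C_def)
  qed
  have "(\<Sum>y'\<in>{y'. is_config y' \<and> gen q \<alpha> y y' \<noteq> 0}. of_real (gen q \<alpha> y y') * F y')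
      = (\<Sum>y'\<in>C. of_real (gen q \<alpha> y y') * F y')"
  proof (rule sum.mono_neutral_left[OF fC sub])
    show "\<forall>i\<in>C - {y'. is_config y' \<and> gen q \<alpha> y y' \<noteq> 0}. of_real (gen q \<alpha> y i) * F i = 0"
      using config_Cs[OF cy] cy unfolding C_def by auto
  qed
  also have "\<dots> = of_real (gen q \<alpha> y y) * F y + (\<Sum>z\<in>Cs y. of_real (rate q \<alpha> y z) * F z)"
    unfolding C_def using finite_Cs[OF fy] y_notin_Cs genC by simp
  also have "gen q \<alpha> y y = - (\<Sum>z\<in>Cs y. rate q \<alpha> y z)"
  proof -
    have "(\<Sum>z\<in>{z. is_config z \<and> z \<noteq> y \<and> rate q \<alpha> y z \<noteq> 0}. rate q \<alpha> y z) = (\<Sum>z\<in>Cs y. rate q \<alpha> y z)"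
    proof (rule sum.mono_neutral_left[OF finite_Cs[OF fy]])
      show "{z. is_config z \<and> z \<noteq> y \<and> rate q \<alpha> y z \<noteq> 0} \<subseteq> Cs y" using rate_nz_Cs by blast
      show "\<forall>i\<in>Cs y - {z. is_config z \<and> z \<noteq> y \<and> rate q \<alpha> y z \<noteq> 0}. rate q \<alpha> y i = 0"
        using config_Cs[OF cy] y_notin_Cs by auto
    qed
    then show ?thesis unfolding gen_def by simp
  qed
  also have "of_real (- (\<Sum>z\<in>Cs y. rate q \<alpha> y z)) * F y + (\<Sum>z\<in>Cs y. of_real (rate q \<alpha> y z) * F z)
      = (\<Sum>z\<in>Cs y. of_real (rate q \<alpha> y z) * (F z - F y))"
  proof -
    have "of_real (- (\<Sum>z\<in>Cs y. rate q \<alpha> y z)) * F y = - (\<Sum>z\<in>Cs y. of_real (rate q \<alpha> y z) * F y)"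
      by (simp add: sum_distrib_right)
    then show ?thesis by (simp add: sum_subtractf right_diff_distrib sum_negf)
  qed
  also have "\<dots> = (\<Sum>x\<in>Rset y. (F (mR y x) - F y)) + (\<Sum>x\<in>Lset y. of_real q * (F (mL y x) - F y))
       + (if 1 \<notin> y then of_real \<alpha> * (F (insert 1 y) - F y) else 0)"
    unfolding sum_Cs[OF fy] using rate_R rate_L rate_E by simp
  also have "\<dots> = Lg (of_real q) (of_real \<alpha>) F y"
  proof -
    have "(\<Sum>x\<in>y. mvx (of_real q) F y x) = (\<Sum>x\<in>y. (if x + 1 \<notin> y then F (mR y x) - F y else 0))
        + (\<Sum>x\<in>y. (if 2 \<le> x \<and> x - 1 \<notin> y then of_real q * (F (mL y x) - F y) else 0))"
      unfolding mvx_def mR_def mL_def by (simp add: sum.distrib)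
    also have "\<dots> = (\<Sum>x\<in>Rset y. (F (mR y x) - F y)) + (\<Sum>x\<in>Lset y. of_real q * (F (mL y x) - F y))"
      unfolding Rset_def Lset_def using fy by (simp add: sum.inter_filter)
    finally show ?thesis unfolding Lg_def by simp
  qed
  finally show ?thesis .
qed



lemma I0_closed:
  fixes Q :: complex
  assumes "Q \<noteq> 0" "Q \<noteq> 1"
  shows "(1 - Q ^ Suc k) / (1 - Q) + Q * (1 - (1/Q) ^ Suc k) / (Q - 1)
       = (1 - Q ^ Suc k) * (1 + Q ^ k) / (Q ^ k * (1 - Q))"
proof -
  have "Q - 1 \<noteq> 0" "1 - Q \<noteq> 0" "Q ^ k \<noteq> 0" using assms by auto
  then show ?thesis using assms by (simp add: divide_simps power_one_over) (simp add: algebra_simps)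
qed
lemma V_Suc:
  assumes "q \<noteq> 0" "q \<noteq> 1" "q > 0"
  shows "Vconst q (Suc k) = Vconst q k * (q ^ k * (1 - q) / ((1 - q ^ Suc k) * (1 + q ^ k)))"
proof -
  have c: "Suc k choose 2 = (k choose 2) + k"
    using binomial_Suc_Suc[of k 1] by (simp add: numeral_2_eq_2)
  have p: "(\<Prod>i=1..Suc k. (1 - q ^ i) * (1 + q ^ (i - 1))) = (\<Prod>i=1..k. (1 - q ^ i) * (1 + q ^ (i - 1))) * ((1 - q ^ Suc k) * (1 + q ^ k))"
    by (simp add: prod.nat_ivl_Suc')
  show ?thesis unfolding Vconst_def c p by (simp add: power_add field_simps)
qed
lemma V_pos: "q > 0 \<Longrightarrow> q \<noteq> 1 \<Longrightarrow> Vconst q n \<noteq> 0"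
proof -
  assume a: "q > 0" "q \<noteq> 1"
  have "(1 - q ^ i) * (1 + q ^ (i - 1)) \<noteq> 0" if "i \<in> {1..n}" for i
  proof -
    have i1: "i \<ge> 1" using that by simp
    have "q ^ i \<noteq> 1"
    proof (cases "q < 1")
      case True then have "q ^ i < 1" using a i1 by (simp add: power_less_one_iff)
      then show ?thesis by simp
    next
      case False then have "q > 1" using a by simp
      then have "q ^ i > 1" using i1 by (simp add: one_less_power)
      then show ?thesis by simp
    qed
    moreover have "1 + q ^ (i - 1) > 0" using a by (simp add: add_pos_pos)
    ultimately show ?thesis by simp
  qed
  then show ?thesis unfolding Vconst_def using a by simp
qed

definition SLI :: "nat set \<Rightarrow> (nat \<times> bool) list set" where
  "SLI I = {pl. distinct (map fst pl) \<and> set (map fst pl) = I}"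

definition valf :: "real \<Rightarrow> (nat \<Rightarrow> complex) \<Rightarrow> nat \<times> bool \<Rightarrow> complex" where
  "valf q w p = (if snd p then w (fst p) else iota (of_real q) (w (fst p)))"

primrec Ab :: "complex \<Rightarrow> complex list \<Rightarrow> complex" where
  "Ab Q [] = 1"
| "Ab Q (v # vs) = prod_list (map (Sm Q v) vs) * Ab Q vs"

fun phiL :: "real \<Rightarrow> real \<Rightarrow> nat list \<Rightarrow> complex list \<Rightarrow> complex" where
  "phiL q \<alpha> [] vs = 1"
| "phiL q \<alpha> (y # ys) [] = 1"
| "phiL q \<alpha> (y # ys) (v # vs) = phi q \<alpha> y v * phiL q \<alpha> ys vs"

definition GI :: "real \<Rightarrow> real \<Rightarrow> (nat \<Rightarrow> complex) \<Rightarrow> nat set \<Rightarrow> nat list \<Rightarrow> complex" where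
  "GI q \<alpha> w I ys = (\<Sum>pl\<in>SLI I. Ab (of_real q) (map (valf q w) pl) * phiL q \<alpha> ys (map (valf q w) pl))"

lemma SLI_empty: "SLI {} = {[]}"
  unfolding SLI_def by auto

lemma SLI_length: "pl \<in> SLI I \<Longrightarrow> length pl = card I"
  unfolding SLI_def using distinct_card by fastforce

lemma finite_SLI:
  assumes "finite I"
  shows "finite (SLI I)"
proof -
  have "SLI I \<subseteq> {xs. set xs \<subseteq> I \<times> UNIV \<and> length xs = card I}"
    using SLI_length unfolding SLI_def by force
  moreover have "finite {xs. set xs \<subseteq> I \<times> (UNIV :: bool set) \<and> length xs = card I}"
    using finite_lists_length_eq[of "I \<times> (UNIV :: bool set)" "card I"] assms by simp
  ultimately show ?thesis by (rule finite_subset)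
qed

lemma SLI_rec:
  assumes "I \<noteq> {}"
  shows "SLI I = (\<Union>p\<in>I \<times> UNIV. (\<lambda>pl. p # pl) ` SLI (I - {fst p}))"
proof
  show "SLI I \<subseteq> (\<Union>p\<in>I \<times> UNIV. (\<lambda>pl. p # pl) ` SLI (I - {fst p}))"
  proof
    fix pl assume pl: "pl \<in> SLI I"
    then obtain p pl' where e: "pl = p # pl'" using assms unfolding SLI_def by (cases pl) auto
    obtain i b where p: "p = (i, b)" by (cases p)
    have "p \<in> I \<times> UNIV" "pl' \<in> SLI (I - {fst p})" using pl unfolding e SLI_def p
      by (auto simp: image_iff)
    then show "pl \<in> (\<Union>p\<in>I \<times> UNIV. (\<lambda>pl. p # pl) ` SLI (I - {fst p}))" unfolding e by blast
  qed
next
  show "(\<Union>p\<in>I \<times> UNIV. (\<lambda>pl. p # pl) ` SLI (I - {fst p})) \<subseteq> SLI I"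
  proof
    fix pl assume "pl \<in> (\<Union>p\<in>I \<times> UNIV. (\<lambda>pl. p # pl) ` SLI (I - {fst p}))"
    then obtain p pl' where a: "p \<in> I \<times> UNIV" "pl' \<in> SLI (I - {fst p})" "pl = p # pl'" by blast
    have "set (map fst pl') = I - {fst p}" "distinct (map fst pl')" using a(2) unfolding SLI_def by auto
    moreover have "fst p \<in> I" using a(1) by auto
    ultimately show "pl \<in> SLI I" unfolding SLI_def a(3) by auto
  qed
qed

lemma sum_SLI_rec:
  assumes "finite I" "I \<noteq> {}"
    and that: "\<And>i. i \<in> I \<Longrightarrow> g' i = (\<Sum>pl\<in>SLI (I - {i}). g ((i, True) # pl)) + (\<Sum>pl\<in>SLI (I - {i}). g ((i, False) # pl))"
  shows "(\<Sum>pl\<in>SLI I. g pl) = (\<Sum>i\<in>I. g' i)"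
proof -
  have fin: "finite (I \<times> (UNIV :: bool set))" using assms(1) by simp
  have "(\<Sum>pl\<in>SLI I. g pl) = (\<Sum>p\<in>I \<times> UNIV. sum g ((\<lambda>pl. p # pl) ` SLI (I - {fst p})))"
    unfolding SLI_rec[OF assms(2)]
    by (rule sum.UNION_disjoint[OF fin]) (auto intro: finite_SLI simp: assms(1) finite_SLI)
  also have "\<dots> = (\<Sum>p\<in>I \<times> UNIV. \<Sum>pl\<in>SLI (I - {fst p}). g (p # pl))"
    by (rule sum.cong[OF refl]) (simp add: sum.reindex)
  also have "\<dots> = (\<Sum>i\<in>I. \<Sum>b\<in>UNIV. \<Sum>pl\<in>SLI (I - {i}). g ((i, b) # pl))"
    using sum.cartesian_product[of "\<lambda>i b. \<Sum>pl\<in>SLI (I - {i}). g ((i, b) # pl)" "UNIV :: bool set" I]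
    by (simp add: case_prod_beta)
  also have "\<dots> = (\<Sum>i\<in>I. g' i)"
    by (rule sum.cong[OF refl]) (simp add: that UNIV_bool add.commute)
  finally show ?thesis .
qed


lemma prod_Sm_SLI:
  assumes "pl \<in> SLI J" "\<forall>j\<in>J. w j \<noteq> 0" "q \<noteq> 0"
  shows "prod_list (map (Sm (of_real q) v \<circ> valf q w) pl) = (\<Prod>j\<in>J. Sm (of_real q) v (w j))"
proof -
  have Q0: "(of_real q :: complex) \<noteq> 0" using assms(3) by simp
  have d: "distinct (map fst pl)" and st: "set (map fst pl) = J" using assms(1) unfolding SLI_def by auto
  have "map (Sm (of_real q) v \<circ> valf q w) pl = map ((\<lambda>j. Sm (of_real q) v (w j)) \<circ> fst) pl"
  proof (rule map_cong[OF refl])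
    fix p assume "p \<in> set pl"
    then have "fst p \<in> J" using st by auto
    then show "(Sm (of_real q) v \<circ> valf q w) p = ((\<lambda>j. Sm (of_real q) v (w j)) \<circ> fst) p"
      unfolding valf_def using S_iota2[OF Q0, of "w (fst p)" v] assms(2) by auto
  qed
  then have "prod_list (map (Sm (of_real q) v \<circ> valf q w) pl) = prod_list (map ((\<lambda>j. Sm (of_real q) v (w j)) \<circ> fst) pl)"
    by (rule arg_cong)
  also have "\<dots> = prod_list (map (\<lambda>j. Sm (of_real q) v (w j)) (map fst pl))"
    by (simp only: map_map)
  also have "\<dots> = (\<Prod>j\<in>J. Sm (of_real q) v (w j))"
    using prod.distinct_set_conv_list[OF d, of "\<lambda>j. Sm (of_real q) v (w j)"] st by simp
  finally show ?thesis .
qed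

definition cf0 :: "real \<Rightarrow> complex set \<Rightarrow> complex \<Rightarrow> complex" where
  "cf0 q W u = tw (of_real q) (\<lambda>v. Pp (of_real q) v (W - {u})) u"

lemma img_remove: "inj_on w I \<Longrightarrow> i \<in> I \<Longrightarrow> w ` I - {w i} = w ` (I - {i})"
  by (auto simp: inj_on_def)

lemma GI_cons:
  assumes fin: "finite I" and ne: "I \<noteq> {}" and inj: "inj_on w I" and nz: "\<forall>j\<in>I. w j \<noteq> 0" and q0: "q \<noteq> 0"
  shows "GI q \<alpha> w I (y # ys) = (\<Sum>i\<in>I. cf q \<alpha> y (w ` I) (w i) * GI q \<alpha> w (I - {i}) ys)"
  unfolding GI_def
proof (rule sum_SLI_rec[OF fin ne])
  fix i assume i: "i \<in> I"
  define Q :: complex where "Q = of_real q"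
  have nz': "\<forall>j\<in>I - {i}. w j \<noteq> 0" using nz by auto
  have pp: "prod_list (map (Sm Q v \<circ> valf q w) pl) = Pp Q v (w ` I - {w i})" if "pl \<in> SLI (I - {i})" for v pl
    unfolding img_remove[OF inj i] Pp_def Q_def prod_Sm_SLI[OF that nz' q0]
    using prod.reindex[of w "I - {i}" "Sm (of_real q) v"] inj by (simp add: inj_on_diff)
  have vt: "valf q w (i, True) = w i" "valf q w (i, False) = iota Q (w i)" unfolding valf_def Q_def by simp_all
  show "cf q \<alpha> y (w ` I) (w i) * (\<Sum>pl\<in>SLI (I - {i}). Ab (of_real q) (map (valf q w) pl) * phiL q \<alpha> ys (map (valf q w) pl)) =
        (\<Sum>pl\<in>SLI (I - {i}). Ab (of_real q) (map (valf q w) ((i, True) # pl)) * phiL q \<alpha> (y # ys) (map (valf q w) ((i, True) # pl))) +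
        (\<Sum>pl\<in>SLI (I - {i}). Ab (of_real q) (map (valf q w) ((i, False) # pl)) * phiL q \<alpha> (y # ys) (map (valf q w) ((i, False) # pl)))"
    unfolding cf_def tw_def Q_def[symmetric]
    by (simp add: vt pp sum_distrib_left sum_distrib_right sum.distrib[symmetric] algebra_simps cong: sum.cong)
qed

lemma GI_nil_rec:
  assumes fin: "finite I" and ne: "I \<noteq> {}" and inj: "inj_on w I" and nz: "\<forall>j\<in>I. w j \<noteq> 0" and q0: "q \<noteq> 0"
  shows "GI q \<alpha> w I [] = (\<Sum>i\<in>I. cf0 q (w ` I) (w i) * GI q \<alpha> w (I - {i}) [])"
  unfolding GI_def
proof (rule sum_SLI_rec[OF fin ne])
  fix i assume i: "i \<in> I"
  define Q :: complex where "Q = of_real q"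
  have nz': "\<forall>j\<in>I - {i}. w j \<noteq> 0" using nz by auto
  have pp: "prod_list (map (Sm Q v \<circ> valf q w) pl) = Pp Q v (w ` I - {w i})" if "pl \<in> SLI (I - {i})" for v pl
    unfolding img_remove[OF inj i] Pp_def Q_def prod_Sm_SLI[OF that nz' q0]
    using prod.reindex[of w "I - {i}" "Sm (of_real q) v"] inj by (simp add: inj_on_diff)
  have vt: "valf q w (i, True) = w i" "valf q w (i, False) = iota Q (w i)" unfolding valf_def Q_def by simp_all
  show "cf0 q (w ` I) (w i) * (\<Sum>pl\<in>SLI (I - {i}). Ab (of_real q) (map (valf q w) pl) * phiL q \<alpha> [] (map (valf q w) pl)) =
        (\<Sum>pl\<in>SLI (I - {i}). Ab (of_real q) (map (valf q w) ((i, True) # pl)) * phiL q \<alpha> [] (map (valf q w) ((i, True) # pl))) +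
        (\<Sum>pl\<in>SLI (I - {i}). Ab (of_real q) (map (valf q w) ((i, False) # pl)) * phiL q \<alpha> [] (map (valf q w) ((i, False) # pl)))"
    unfolding cf0_def tw_def Q_def[symmetric]
    by (simp add: vt pp sum_distrib_left sum_distrib_right sum.distrib[symmetric] algebra_simps cong: sum.cong)
qed


lemma qpow_ne1: "q > 0 \<Longrightarrow> q \<noteq> 1 \<Longrightarrow> i \<ge> 1 \<Longrightarrow> (q::real) ^ i \<noteq> 1"
proof -
  assume a: "q > 0" "q \<noteq> 1" "i \<ge> 1"
  show ?thesis
  proof (cases "q < 1")
    case True then have "q ^ i < 1" using a by (simp add: power_less_one_iff)
    then show ?thesis by simp
  next
    case False then have "q > 1" using a by simp
    then have "q ^ i > 1" using a by (simp add: one_less_power)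
    then show ?thesis by simp
  qed
qed

lemma fr: "(A::complex) \<noteq> 0 \<Longrightarrow> D \<noteq> 0 \<Longrightarrow> E \<noteq> 0 \<Longrightarrow> B \<noteq> 0 \<Longrightarrow> C \<noteq> 0 \<Longrightarrow>
   V = A * (B * C / (D * E)) \<Longrightarrow> (1 / A) * (D * E / (B * C)) = 1 / V"
proof -
  assume a: "A \<noteq> 0" "D \<noteq> 0" "E \<noteq> 0" "B \<noteq> 0" "C \<noteq> 0" "V = A * (B * C / (D * E))"
  show ?thesis unfolding a(6) using a(1-5) by (simp add: divide_simps)
qed

lemma GI_nil_val:
  fixes q :: real
  assumes qp: "q > 0" and q1: "q \<noteq> 1"
  shows "finite I \<Longrightarrow> inj_on w I \<Longrightarrow> gW (of_real q) (w ` I) \<Longrightarrow> card I = n \<Longrightarrow>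
    GI q \<alpha> w I [] = 1 / of_real (Vconst q n)"
proof (induction n arbitrary: I)
  case 0
  then have "I = {}" by simp
  then show ?case unfolding GI_def Vconst_def by (simp add: SLI_empty numeral_2_eq_2)
next
  case (Suc n)
  define Q :: complex where "Q = of_real q"
  have q0: "q \<noteq> 0" using qp by simp
  have Q0: "Q \<noteq> 0" and Q1: "Q \<noteq> 1" unfolding Q_def using q0 q1 by auto
  have ne: "I \<noteq> {}" using Suc.prems(4) by auto
  have nz: "\<forall>j\<in>I. w j \<noteq> 0"
  proof
    fix j assume "j \<in> I"
    then have "w j \<in> w ` I" by simp
    then show "w j \<noteq> 0" using node_ok(1)[OF Suc.prems(3)[folded Q_def] Q0, of "w j" "w j"] by simp
  qed
  have IH: "GI q \<alpha> w (I - {i}) [] = 1 / of_real (Vconst q n)" if i: "i \<in> I" for i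
  proof (rule Suc.IH)
    show "finite (I - {i})" using Suc.prems(1) by simp
    show "inj_on w (I - {i})" using Suc.prems(2) by (simp add: inj_on_diff)
    show "gW (of_real q) (w ` (I - {i}))" by (rule gW_subset[OF Suc.prems(3)]) auto
    show "card (I - {i}) = n" using Suc.prems(1,4) i by simp
  qed
  have "GI q \<alpha> w I [] = (\<Sum>i\<in>I. cf0 q (w ` I) (w i) * (1 / of_real (Vconst q n)))"
    unfolding GI_nil_rec[OF Suc.prems(1) ne Suc.prems(2) nz q0]
    by (rule sum.cong[OF refl]) (simp add: IH)
  also have "\<dots> = (1 / of_real (Vconst q n)) * (\<Sum>u\<in>w ` I. cf0 q (w ` I) u)"
    using sum.reindex[OF Suc.prems(2), of "cf0 q (w ` I)"] by (simp add: sum_distrib_left)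
  also have "(\<Sum>u\<in>w ` I. cf0 q (w ` I) u) = Tsum Q (\<lambda>_. 1) (w ` I)"
    unfolding Tsum_def cf0_def Q_def by simp
  also have "\<dots> = (1 - Q ^ Suc n) * (1 + Q ^ n) / (Q ^ n * (1 - Q))"
    using I0[OF Q0 Q1 Suc.prems(3)[folded Q_def]] I0_closed[OF Q0 Q1, of n]
      card_image[OF Suc.prems(2)] Suc.prems(4) by simp
  also have "(1 / of_real (Vconst q n)) * ((1 - Q ^ Suc n) * (1 + Q ^ n) / (Q ^ n * (1 - Q)))
      = 1 / of_real (Vconst q (Suc n))"
  proof -
    have V: "Vconst q (Suc n) = Vconst q n * (q ^ n * (1 - q) / ((1 - q ^ Suc n) * (1 + q ^ n)))"
      using V_Suc[OF q0 q1 qp] .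
    have a1: "Vconst q n \<noteq> 0" using V_pos[OF qp q1] .
    have a2: "1 - q ^ Suc n \<noteq> 0" using qpow_ne1[OF qp q1, of "Suc n"] by simp
    have "q ^ n > 0" using qp by simp
    then have a3: "1 + q ^ n \<noteq> 0" by linarith
    have a4: "q ^ n \<noteq> 0" "1 - q \<noteq> 0" using q0 q1 by auto
    have "of_real (Vconst q (Suc n)) = (of_real (Vconst q n) :: complex) * (Q ^ n * (1 - Q) / ((1 - Q ^ Suc n) * (1 + Q ^ n)))"
      unfolding V Q_def by simp
    moreover have "(of_real (Vconst q n) :: complex) \<noteq> 0" using a1 by simp
    moreover have "1 - Q ^ Suc n \<noteq> 0"
    proof -
      have e: "Q ^ Suc n = of_real (q ^ Suc n)" unfolding Q_def by (simp only: of_real_power)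
      have "q ^ Suc n \<noteq> 1" using qpow_ne1[OF qp q1, of "Suc n"] by simp
      then have "of_real (q ^ Suc n) \<noteq> (1::complex)" by (metis of_real_eq_1_iff)
      then show ?thesis unfolding e by simp
    qed
    moreover have "1 + Q ^ n \<noteq> 0"
    proof -
      have e: "1 + Q ^ n = of_real (1 + q ^ n)" unfolding Q_def by (simp only: of_real_power of_real_add of_real_1)
      show ?thesis unfolding e using a3 by (simp only: of_real_eq_0_iff not_False_eq_True)
    qed
    moreover have "Q ^ n \<noteq> 0" using Q0 by simp
    moreover have "1 - Q \<noteq> 0" using Q1 by simp
    ultimately show ?thesis using fr by metis
  qed
  finally show ?case .
qed


lemma HG:
  fixes q \<alpha> :: real
  assumes qp: "q > 0" and q1: "q \<noteq> 1"
  shows "finite I \<Longrightarrow> inj_on w I \<Longrightarrow> gW (of_real q) (w ` I) \<Longrightarrow> length ys \<le> card I \<Longrightarrow>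
    of_real (Vconst q (card I - length ys) * \<alpha> ^ (card I - length ys)) * GI q \<alpha> w I ys = Hh q \<alpha> (w ` I) ys"
proof (induction ys arbitrary: I)
  case Nil
  have V: "(of_real (Vconst q (card I)) :: complex) \<noteq> 0" using V_pos[OF qp q1] by simp
  show ?case using GI_nil_val[OF qp q1 Nil.prems(1-3) refl, of \<alpha>] V card_image[OF Nil.prems(2)]
    by (simp add: field_simps)
next
  case (Cons y ys)
  have q0: "q \<noteq> 0" using qp by simp
  have Q0: "(of_real q :: complex) \<noteq> 0" using q0 by simp
  have ne: "I \<noteq> {}" using Cons.prems(1,4) by auto
  have nz: "\<forall>j\<in>I. w j \<noteq> 0"
  proof
    fix j assume "j \<in> I"
    then have "w j \<in> w ` I" by simp
    then show "w j \<noteq> 0" using node_ok(1)[OF Cons.prems(3) Q0, of "w j" "w j"] by simp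
  qed
  define c where "c = (of_real (Vconst q (card I - length (y # ys)) * \<alpha> ^ (card I - length (y # ys))) :: complex)"
  have IH: "c * GI q \<alpha> w (I - {i}) ys = Hh q \<alpha> (w ` (I - {i})) ys" if i: "i \<in> I" for i
  proof -
    have e: "card (I - {i}) - length ys = card I - length (y # ys)" using Cons.prems(1) i by simp
    show ?thesis unfolding c_def e[symmetric]
    proof (rule Cons.IH)
      show "finite (I - {i})" using Cons.prems(1) by simp
      show "inj_on w (I - {i})" using Cons.prems(2) by (simp add: inj_on_diff)
      show "gW (of_real q) (w ` (I - {i}))" by (rule gW_subset[OF Cons.prems(3)]) auto
      show "length ys \<le> card (I - {i})" using Cons.prems(1,4) i by simp
    qed
  qed
  have "c * GI q \<alpha> w I (y # ys) = (\<Sum>i\<in>I. cf q \<alpha> y (w ` I) (w i) * (c * GI q \<alpha> w (I - {i}) ys))"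
    unfolding GI_cons[OF Cons.prems(1) ne Cons.prems(2) nz q0] by (simp add: sum_distrib_left algebra_simps)
  also have "\<dots> = (\<Sum>i\<in>I. cf q \<alpha> y (w ` I) (w i) * Hh q \<alpha> (w ` I - {w i}) ys)"
    by (rule sum.cong[OF refl]) (simp add: IH img_remove[OF Cons.prems(2)])
  also have "\<dots> = Hh q \<alpha> (w ` I) (y # ys)"
    using sum.reindex[OF Cons.prems(2), of "\<lambda>u. cf q \<alpha> y (w ` I) u * Hh q \<alpha> (w ` I - {u}) ys"] by simp
  finally show ?case unfolding c_def .
qed



lemma prod_list_upt: "prod_list (map f [a..<b]) = (\<Prod>i\<in>{a..<b}. f i)"
  using prod.distinct_set_conv_list[of "[a..<b]" f] by simp

lemma Ab_upt: "Ab Q (map u [a..<b]) = (\<Prod>i\<in>{a..<b}. \<Prod>j\<in>{i<..<b}. Sm Q (u i) (u j))"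
proof (induction "b - a" arbitrary: a)
  case 0 then show ?case by simp
next
  case (Suc k)
  then have ab: "a < b" by simp
  have e: "[a..<b] = a # [Suc a..<b]" using ab upt_conv_Cons by blast
  have IH: "Ab Q (map u [Suc a..<b]) = (\<Prod>i\<in>{Suc a..<b}. \<Prod>j\<in>{i<..<b}. Sm Q (u i) (u j))"
    using Suc by simp
  have "Ab Q (map u [a..<b]) = prod_list (map (Sm Q (u a)) (map u [Suc a..<b])) * Ab Q (map u [Suc a..<b])"
    unfolding e by simp
  also have "prod_list (map (Sm Q (u a)) (map u [Suc a..<b])) = (\<Prod>j\<in>{a<..<b}. Sm Q (u a) (u j))"
  proof -
    have "{a<..<b} = {Suc a..<b}" by auto
    then show ?thesis using prod_list_upt[of "\<lambda>j. Sm Q (u a) (u j)" "Suc a" b] by (simp add: comp_def)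
  qed
  also have "(\<Prod>j\<in>{a<..<b}. Sm Q (u a) (u j)) * Ab Q (map u [Suc a..<b])
      = (\<Prod>i\<in>{a..<b}. \<Prod>j\<in>{i<..<b}. Sm Q (u i) (u j))"
    unfolding IH
    using prod.atLeast_Suc_lessThan[OF ab, of "\<lambda>i. \<Prod>j\<in>{i<..<b}. Sm Q (u i) (u j)"] by simp
  finally show ?case .
qed

lemma phiL_upt:
  "length ys \<le> b - a \<Longrightarrow> phiL q \<alpha> ys (map u [a..<b]) = (\<Prod>i<length ys. phi q \<alpha> (ys ! i) (u (a + i)))"
proof (induction ys arbitrary: a)
  case Nil then show ?case by simp
next
  case (Cons y ys)
  then have ab: "a < b" by simp
  have e: "[a..<b] = a # [Suc a..<b]" using ab upt_conv_Cons by blast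
  have "phiL q \<alpha> (y # ys) (map u [a..<b]) = phi q \<alpha> y (u a) * phiL q \<alpha> ys (map u [Suc a..<b])"
    unfolding e by simp
  also have "\<dots> = phi q \<alpha> y (u a) * (\<Prod>i<length ys. phi q \<alpha> (ys ! i) (u (Suc a + i)))"
    using Cons by simp
  also have "\<dots> = (\<Prod>i<length (y # ys). phi q \<alpha> ((y # ys) ! i) (u (a + i)))"
    unfolding length_Cons prod.lessThan_Suc_shift by simp
  finally show ?case .
qed


definition fsp :: "nat \<Rightarrow> (nat \<Rightarrow> int) \<Rightarrow> (nat \<times> bool) list" where
  "fsp N \<sigma> = map (\<lambda>k. (nat \<bar>\<sigma> k\<bar>, \<sigma> k > 0)) [1..<N+1]"

definition gsp :: "nat \<Rightarrow> (nat \<times> bool) list \<Rightarrow> nat \<Rightarrow> int" where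
  "gsp N pl = (\<lambda>k. if k \<in> {1..N} then (if snd (pl ! (k-1)) then int (fst (pl ! (k-1))) else - int (fst (pl ! (k-1)))) else 0)"

lemma fsp_nth: "i < N \<Longrightarrow> fsp N \<sigma> ! i = (nat \<bar>\<sigma> (Suc i)\<bar>, \<sigma> (Suc i) > 0)"
  unfolding fsp_def by (simp add: nth_upt del: upt_Suc)

lemma length_fsp: "length (fsp N \<sigma>) = N" unfolding fsp_def by simp

lemma fsp_in: assumes "\<sigma> \<in> signed_perms N" shows "fsp N \<sigma> \<in> SLI {1..N}"
proof -
  have b: "bij_betw (\<lambda>k. nat \<bar>\<sigma> k\<bar>) {1..N} {1..N}" using assms unfolding signed_perms_def by simp
  have e: "map fst (fsp N \<sigma>) = map (\<lambda>k. nat \<bar>\<sigma> k\<bar>) [1..<N+1]" unfolding fsp_def by simp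
  have s: "set [1..<N+1] = {1..N}" by auto
  have "distinct (map (\<lambda>k. nat \<bar>\<sigma> k\<bar>) [1..<N+1])"
    using b unfolding bij_betw_def distinct_map s by simp
  moreover have "set (map (\<lambda>k. nat \<bar>\<sigma> k\<bar>) [1..<N+1]) = {1..N}"
    using b unfolding bij_betw_def by (simp only: set_map s)
  ultimately have "distinct (map fst (fsp N \<sigma>)) \<and> set (map fst (fsp N \<sigma>)) = {1..N}" unfolding e by blast
  then show ?thesis unfolding SLI_def by blast
qed

lemma gsp_in: assumes "pl \<in> SLI {1..N}" shows "gsp N pl \<in> signed_perms N"
proof -
  have d: "distinct (map fst pl)" and st: "set (map fst pl) = {1..N}" using assms unfolding SLI_def by auto
  have len: "length pl = N" using SLI_length[OF assms] by simp
  have fk: "fst (pl ! (k-1)) \<in> {1..N}" if "k \<in> {1..N}" for k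
  proof -
    have "k - 1 < length pl" using that len by auto
    then have "fst (pl ! (k-1)) \<in> set (map fst pl)" by (simp add: image_iff) (metis nth_mem)
    then show ?thesis using st by simp
  qed
  have na: "nat \<bar>gsp N pl k\<bar> = fst (pl ! (k-1))" if "k \<in> {1..N}" for k
    unfolding gsp_def using that by simp
  have nz: "gsp N pl k \<noteq> 0" if "k \<in> {1..N}" for k
    using fk[OF that] that unfolding gsp_def by auto
  have "bij_betw (\<lambda>k. fst (pl ! (k-1))) {1..N} {1..N}"
  proof (rule bij_betw_imageI)
    show "inj_on (\<lambda>k. fst (pl ! (k-1))) {1..N}"
    proof (rule inj_onI)
      fix a b assume ab: "a \<in> {1..N}" "b \<in> {1..N}" "fst (pl ! (a-1)) = fst (pl ! (b-1))"
      moreover have "a - 1 < length pl" "b - 1 < length pl" using ab(1,2) len by auto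
      ultimately have "map fst pl ! (a-1) = map fst pl ! (b-1)" by simp
      then have "a - 1 = b - 1" using d ab len nth_eq_iff_index_eq[OF d] by auto
      then show "a = b" using ab by auto
    qed
    show "(\<lambda>k. fst (pl ! (k-1))) ` {1..N} = {1..N}"
    proof
      show "(\<lambda>k. fst (pl ! (k-1))) ` {1..N} \<subseteq> {1..N}" using fk by auto
      show "{1..N} \<subseteq> (\<lambda>k. fst (pl ! (k-1))) ` {1..N}"
      proof
        fix x assume "x \<in> {1..N}"
        then have "x \<in> set (map fst pl)" using st by simp
        then obtain i where i: "i < length pl" "fst (pl ! i) = x" by (auto simp: in_set_conv_nth)
        then have "Suc i \<in> {1..N}" "fst (pl ! (Suc i - 1)) = x" using len by auto
        then show "x \<in> (\<lambda>k. fst (pl ! (k-1))) ` {1..N}" by (metis image_eqI)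
      qed
    qed
  qed
  then have "bij_betw (\<lambda>k. nat \<bar>gsp N pl k\<bar>) {1..N} {1..N}"
    by (rule bij_betw_cong[THEN iffD1, rotated]) (simp add: na)
  moreover have "\<forall>k. k \<notin> {1..N} \<longrightarrow> gsp N pl k = 0" unfolding gsp_def by simp
  ultimately show ?thesis unfolding signed_perms_def using nz by blast
qed

lemma gsp_fsp: assumes "\<sigma> \<in> signed_perms N" shows "gsp N (fsp N \<sigma>) = \<sigma>"
proof
  fix k
  show "gsp N (fsp N \<sigma>) k = \<sigma> k"
  proof (cases "k \<in> {1..N}")
    case True
    then have "fsp N \<sigma> ! (k-1) = (nat \<bar>\<sigma> k\<bar>, \<sigma> k > 0)" using fsp_nth[of "k-1" N \<sigma>] by auto
    moreover have "\<sigma> k \<noteq> 0" using assms True unfolding signed_perms_def by auto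
    ultimately show ?thesis unfolding gsp_def using True by auto
  next
    case False then show ?thesis using assms unfolding gsp_def signed_perms_def by auto
  qed
qed

lemma fsp_gsp: assumes "pl \<in> SLI {1..N}" shows "fsp N (gsp N pl) = pl"
proof (rule nth_equalityI)
  have len: "length pl = N" using SLI_length[OF assms] by simp
  show "length (fsp N (gsp N pl)) = length pl" using len length_fsp by simp
  fix i assume "i < length (fsp N (gsp N pl))"
  then have i: "i < N" using length_fsp by simp
  have st: "set (map fst pl) = {1..N}" using assms unfolding SLI_def by auto
  have "fst (pl ! i) \<in> {1..N}" using st i len by (metis nth_map nth_mem length_map)
  then have pos: "fst (pl ! i) \<ge> 1" by simp
  have "gsp N pl (Suc i) = (if snd (pl ! i) then int (fst (pl ! i)) else - int (fst (pl ! i)))"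
    unfolding gsp_def using i by simp
  then show "fsp N (gsp N pl) ! i = pl ! i" using fsp_nth[OF i] pos by (cases "pl ! i") auto
qed

lemma bij_fsp: "bij_betw (fsp N) (signed_perms N) (SLI {1..N})"
proof (rule bij_betw_byWitness[where f' = "gsp N"])
  show "\<forall>a\<in>signed_perms N. gsp N (fsp N a) = a" using gsp_fsp by blast
  show "\<forall>a'\<in>SLI {1..N}. fsp N (gsp N a') = a'" using fsp_gsp by blast
  show "fsp N ` signed_perms N \<subseteq> SLI {1..N}" using fsp_in by blast
  show "gsp N ` SLI {1..N} \<subseteq> signed_perms N" using gsp_in by blast
qed



lemma valf_fsp:
  assumes "\<sigma> \<in> signed_perms N"
  shows "map (valf q w) (fsp N \<sigma>) = map (wsig q w \<sigma>) [1..<N+1]"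
  unfolding fsp_def map_map
proof (rule map_cong[OF refl])
  fix k assume "k \<in> set [1..<N+1]"
  then have k: "k \<in> {1..N}" by auto
  then have nz: "\<sigma> k \<noteq> 0" using assms unfolding signed_perms_def by auto
  show "(valf q w \<circ> (\<lambda>k. (nat \<bar>\<sigma> k\<bar>, 0 < \<sigma> k))) k = wsig q w \<sigma> k"
  proof (cases "\<sigma> k > 0")
    case True then show ?thesis unfolding valf_def wsig_def by simp
  next
    case False
    then have "\<sigma> k < 0" using nz by simp
    then have "nat \<bar>\<sigma> k\<bar> = nat (- \<sigma> k)" by simp
    then show ?thesis using False unfolding valf_def wsig_def iota_def by simp
  qed
qed

lemma Ffun_sum:
  fixes q \<alpha> :: real
  assumes M: "length ys \<le> N"
  shows "(\<Sum>\<sigma>\<in>signed_perms N. let u = wsig q w \<sigma> in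
         (\<Prod>i\<in>{1..N}. \<Prod>j\<in>{i<..N}.
            (u i - of_real q * u j) / (u i - u j) * ((1 - u i * u j) / (1 - of_real q * u i * u j)))
         * (\<Prod>i\<in>{1..length ys}. phi q \<alpha> (ys ! (i - 1)) (u i)))
       = GI q \<alpha> w {1..N} ys"
proof -
  define Gt where "Gt pl = Ab (of_real q) (map (valf q w) pl) * phiL q \<alpha> ys (map (valf q w) pl)" for pl
  have t: "(let u = wsig q w \<sigma> in
         (\<Prod>i\<in>{1..N}. \<Prod>j\<in>{i<..N}.
            (u i - of_real q * u j) / (u i - u j) * ((1 - u i * u j) / (1 - of_real q * u i * u j)))
         * (\<Prod>i\<in>{1..length ys}. phi q \<alpha> (ys ! (i - 1)) (u i))) = Gt (fsp N \<sigma>)"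
    if s: "\<sigma> \<in> signed_perms N" for \<sigma>
  proof -
    define u where "u = wsig q w \<sigma>"
    have a: "Ab (of_real q) (map u [1..<N+1]) = (\<Prod>i\<in>{1..N}. \<Prod>j\<in>{i<..N}.
            (u i - of_real q * u j) / (u i - u j) * ((1 - u i * u j) / (1 - of_real q * u i * u j)))"
    proof -
      have e1: "{1..<N+1} = {1..N}" by auto
      have e2: "{i<..<N+1} = {i<..N}" for i by auto
      show ?thesis unfolding Ab_upt e1 e2 Sm_def ..
    qed
    have b: "phiL q \<alpha> ys (map u [1..<N+1]) = (\<Prod>i\<in>{1..length ys}. phi q \<alpha> (ys ! (i - 1)) (u i))"
    proof -
      have "phiL q \<alpha> ys (map u [1..<N+1]) = (\<Prod>i<length ys. phi q \<alpha> (ys ! i) (u (1 + i)))"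
        using phiL_upt[where ys=ys and a=1 and b="N+1" and q=q and \<alpha>=\<alpha> and u=u] M by (simp del: upt_Suc)
      also have "\<dots> = (\<Prod>i\<in>{Suc 0..length ys}. phi q \<alpha> (ys ! (i - 1)) (u i))"
        unfolding prod.atLeast1_atMost_eq by simp
      finally show ?thesis by simp
    qed
    show ?thesis unfolding Gt_def valf_fsp[OF s] u_def[symmetric] a b Let_def ..
  qed
  have "(\<Sum>\<sigma>\<in>signed_perms N. let u = wsig q w \<sigma> in
         (\<Prod>i\<in>{1..N}. \<Prod>j\<in>{i<..N}.
            (u i - of_real q * u j) / (u i - u j) * ((1 - u i * u j) / (1 - of_real q * u i * u j)))
         * (\<Prod>i\<in>{1..length ys}. phi q \<alpha> (ys ! (i - 1)) (u i)))
      = (\<Sum>\<sigma>\<in>signed_perms N. Gt (fsp N \<sigma>))"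
    by (rule sum.cong[OF refl]) (rule t)
  also have "\<dots> = (\<Sum>pl\<in>SLI {1..N}. Gt pl)"
    by (rule sum.reindex_bij_betw[OF bij_fsp])
  finally show ?thesis unfolding GI_def Gt_def .
qed

lemma Hh_zero: "finite W \<Longrightarrow> length ys > card W \<Longrightarrow> Hh q \<alpha> W ys = 0"
proof (induction ys arbitrary: W)
  case Nil then show ?case by simp
next
  case (Cons y ys)
  show ?case
  proof (cases "W = {}")
    case True then show ?thesis by simp
  next
    case False
    have "Hh q \<alpha> (W - {w}) ys = 0" if "w \<in> W" for w
    proof -
      have "card W \<ge> 1" using that Cons.prems(1) by (metis One_nat_def Suc_leI card_gt_0_iff empty_iff)
      then have "length ys > card (W - {w})" using Cons.prems that by (simp add: card_Diff_singleton)
      then show ?thesis using Cons.IH[of "W - {w}"] Cons.prems(1) by simp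
    qed
    then show ?thesis by simp
  qed
qed

lemma length_parts: "finite y \<Longrightarrow> length (parts y) = card y"
  unfolding parts_def by simp


lemma generic_inj: assumes "generic q N w" shows "inj_on w {1..N}"
proof (rule inj_onI)
  fix i j assume ij: "i \<in> {1..N}" "j \<in> {1..N}" "w i = w j"
  have A: "\<forall>i\<in>{1..N}. \<forall>j\<in>{1..N}. i \<noteq> j \<longrightarrow>
        (\<forall>a\<in>{w i, 1 / (of_real q * w i)}. \<forall>b\<in>{w j, 1 / (of_real q * w j)}. a \<noteq> b \<and> of_real q * a * b \<noteq> 1)"
    using assms unfolding generic_def by (elim conjE)
  show "i = j"
  proof (rule ccontr)
    assume "i \<noteq> j"
    then have "w i \<noteq> w j" using A ij(1,2) by simp
    then show False using ij(3) by simp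
  qed
qed

lemma generic_gW: assumes "generic q N w" shows "gW (of_real q) (w ` {1..N})"
proof -
  have A0: "\<forall>i\<in>{1..N}. w i \<noteq> 0" using assms unfolding generic_def by (elim conjE)
  have A1: "\<forall>i\<in>{1..N}. \<forall>a\<in>{w i, 1 / (of_real q * w i)}. a \<noteq> 1 \<and> of_real q * a \<noteq> 1 \<and> of_real q * a ^ 2 \<noteq> 1"
    using assms unfolding generic_def by (elim conjE)
  have A2: "\<forall>i\<in>{1..N}. \<forall>j\<in>{1..N}. i \<noteq> j \<longrightarrow>
        (\<forall>a\<in>{w i, 1 / (of_real q * w i)}. \<forall>b\<in>{w j, 1 / (of_real q * w j)}. a \<noteq> b \<and> of_real q * a * b \<noteq> 1)"
    using assms unfolding generic_def by (elim conjE)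
  have B1: "\<forall>u\<in>w ` {1..N}. u \<noteq> 0 \<and> (\<forall>a\<in>{u, iota (of_real q) u}. a \<noteq> 1 \<and> of_real q * a \<noteq> 1 \<and> of_real q * a ^ 2 \<noteq> 1)"
  proof
    fix u assume "u \<in> w ` {1..N}"
    then obtain i where i: "i \<in> {1..N}" "u = w i" by auto
    have "w i \<noteq> 0" using bspec[OF A0 i(1)] .
    moreover have "\<forall>a\<in>{w i, 1 / (of_real q * w i)}. a \<noteq> 1 \<and> of_real q * a \<noteq> 1 \<and> of_real q * a ^ 2 \<noteq> 1"
      using bspec[OF A1 i(1)] .
    ultimately show "u \<noteq> 0 \<and> (\<forall>a\<in>{u, iota (of_real q) u}. a \<noteq> 1 \<and> of_real q * a \<noteq> 1 \<and> of_real q * a ^ 2 \<noteq> 1)"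
      unfolding iota_def i(2) by blast
  qed
  have B2: "\<forall>u\<in>w ` {1..N}. \<forall>u'\<in>w ` {1..N}. u \<noteq> u' \<longrightarrow>
      (\<forall>a\<in>{u, iota (of_real q) u}. \<forall>b\<in>{u', iota (of_real q) u'}. a \<noteq> b \<and> of_real q * a * b \<noteq> 1)"
  proof (intro ballI impI)
    fix u u' assume u: "u \<in> w ` {1..N}" "u' \<in> w ` {1..N}" "u \<noteq> u'"
    obtain i where i: "i \<in> {1..N}" "u = w i" using u(1) by auto
    obtain j where j: "j \<in> {1..N}" "u' = w j" using u(2) by auto
    have "i \<noteq> j" using u(3) i j by auto
    then have C: "\<forall>a\<in>{w i, 1 / (of_real q * w i)}. \<forall>b\<in>{w j, 1 / (of_real q * w j)}. a \<noteq> b \<and> of_real q * a * b \<noteq> 1"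
      using mp[OF bspec[OF bspec[OF A2 i(1)] j(1)]] by blast
    fix a b assume "a \<in> {u, iota (of_real q) u}" "b \<in> {u', iota (of_real q) u'}"
    then have "a \<in> {w i, 1 / (of_real q * w i)}" "b \<in> {w j, 1 / (of_real q * w j)}"
      unfolding iota_def i(2) j(2) by blast+
    then show "a \<noteq> b \<and> of_real q * a * b \<noteq> 1" using C by blast
  qed
  show ?thesis unfolding gW_def by (intro conjI finite_imageI finite_atLeastAtMost B1 B2)
qed

lemma Ffun_FF:
  fixes q \<alpha> :: real
  assumes qp: "q > 0" and q1: "q \<noteq> 1" and gen: "generic q N w" and cy: "is_config y"
  shows "Ffun q \<alpha> N y w = FF q \<alpha> (w ` {1..N}) y"
proof -
  have fy: "finite y" using cy unfolding is_config_def by simp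
  have inj: "inj_on w {1..N}" using generic_inj[OF gen] .
  have cW: "card (w ` {1..N}) = N" using card_image[OF inj] by simp
  show ?thesis
  proof (cases "card y > N")
    case True
    then show ?thesis unfolding Ffun_def FF_def Let_def
      using Hh_zero[of "w ` {1..N}" "parts y"] length_parts[OF fy] cW by simp
  next
    case False
    have l: "length (parts y) \<le> card {1..N}" using False length_parts[OF fy] by simp
    have fs: "(\<Sum>\<sigma>\<in>signed_perms N. let u = wsig q w \<sigma> in
         (\<Prod>i\<in>{1..N}. \<Prod>j\<in>{i<..N}.
            (u i - of_real q * u j) / (u i - u j) * ((1 - u i * u j) / (1 - of_real q * u i * u j)))
         * (\<Prod>i\<in>{1..card y}. phi q \<alpha> (parts y ! (i - 1)) (u i)))
       = GI q \<alpha> w {1..N} (parts y)"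
      using Ffun_sum[of "parts y" N q w \<alpha>] length_parts[OF fy] False by simp
    have "Ffun q \<alpha> N y w = of_real (Vconst q (N - card y) * \<alpha> ^ (N - card y)) * GI q \<alpha> w {1..N} (parts y)"
      unfolding fs[symmetric] Ffun_def Let_def if_not_P[OF False] ..
    also have "\<dots> = Hh q \<alpha> (w ` {1..N}) (parts y)"
      using HG[OF qp q1 _ inj generic_gW[OF gen] l] length_parts[OF fy] by simp
    finally show ?thesis unfolding FF_def .
  qed
qed



theorem lemma2p3:
  fixes q \<alpha> :: real and N :: nat and y :: "nat set" and w :: "nat \<Rightarrow> complex"
  assumes "q > 0" and "q \<noteq> 1" and "\<alpha> \<ge> 0"
    and "is_config y" and "card y \<le> N"
    and "generic q N w"
  shows "(\<Sum>y'\<in>{y'. is_config y' \<and> gen q \<alpha> y y' \<noteq> 0}. of_real (gen q \<alpha> y y') * Ffun q \<alpha> N y' w)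
       = (- of_real \<alpha> + (\<Sum>i=1..N. (1 - of_real q) ^ 2 * w i / ((1 - w i) * (1 - of_real q * w i))))
         * Ffun q \<alpha> N y w"
proof -
  note qp = assms(1) and q1 = assms(2) and cy = assms(4) and cN = assms(5) and gen = assms(6)
  have q0: "q \<noteq> 0" using qp by simp
  define W where "W = w ` {1..N}"
  have inj: "inj_on w {1..N}" using generic_inj[OF gen] .
  have gw: "gW (of_real q) W" unfolding W_def using generic_gW[OF gen] .
  have cW: "card W = N" unfolding W_def using card_image[OF inj] by simp
  have fy: "finite y" "0 \<notin> y" using cy unfolding is_config_def by auto
  have "(\<Sum>y'\<in>{y'. is_config y' \<and> gen q \<alpha> y y' \<noteq> 0}. of_real (gen q \<alpha> y y') * Ffun q \<alpha> N y' w)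
      = (\<Sum>y'\<in>{y'. is_config y' \<and> gen q \<alpha> y y' \<noteq> 0}. of_real (gen q \<alpha> y y') * FF q \<alpha> W y')"
    by (rule sum.cong[OF refl]) (use Ffun_FF[OF qp q1 gen] in \<open>simp add: W_def\<close>)
  also have "\<dots> = Lg (of_real q) (of_real \<alpha>) (FF q \<alpha> W) y"
    by (rule gen_sum[OF cy])
  also have "\<dots> = (EW (of_real q) W - of_real \<alpha>) * FF q \<alpha> W y"
    by (rule MT[OF q0 q1 gw fy(1) fy(2)]) (simp add: cW cN)
  also have "FF q \<alpha> W y = Ffun q \<alpha> N y w" unfolding W_def using Ffun_FF[OF qp q1 gen cy] by simp
  also have "EW (of_real q) W = (\<Sum>i=1..N. (1 - of_real q) ^ 2 * w i / ((1 - w i) * (1 - of_real q * w i)))"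
    unfolding EW_def W_def eps_def using sum.reindex[OF inj] by simp
  finally show ?thesis by simp
qed


end
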